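(* Let $N=1000$, $p_0=1/1000$, $T>0$, let $u\in C([0,T]:H^N(\mathbb{R}^3))$ solve $i\partial_t u-\Lambda u=-(|x|^{-1}\ast|u|^2)u$, let $f(t)=e^{it\Lambda}u(t)$, and assume $$\sup_{t\in[0,T]}\Big[(1+t)^{-p_0}\|u(t)\|_{H^N}+(1+t)^{-p_0}\|xf(t)\|_{H^2}+(1+t)^{-2p_0}\|x^2f(t)\|_{H^2}+\|(1+|\xi|)^{10}\widehat f(t,\xi)\|_{L^\infty_\xi}\Big]\le\varepsilon_1 .$$ For $m\in\{0,1,2,\dots\}$ let $l_0:=\lfloor-29m/40\rfloor+1$ and define, for $s\in[0,T]$, $\xi\in\mathbb{R}^3$, $$I_0(s,\xi):=ic_1\iint_{\mathbb{R}^3\times\mathbb{R}^3}e^{is\phi(\xi,\eta,\sigma)}|\eta|^{-2}\varphi(|\eta|/2^{l_0})\,\widehat f(s,\xi+\eta)\widehat f(s,\xi+\sigma)\overline{\widehat f}(s,\xi+\eta+\sigma)\,d\eta\,d\sigma,$$ with $c_1=2(2\pi)^{-5}$ and $\phi(\xi,\eta,\sigma)=-\Lambda(\xi)+\Lambda(\xi+\eta)+\Lambda(\xi+\sigma)-\Lambda(\xi+\eta+\sigma)$. Then for all $m\in\{0,1,\dots\}$, $k\in\mathbb{Z}\cap[m/300,\infty)$, $s\in[2^m-1,2^m]\cap[0,T]$ and $|\xi|\in[2^k,2^{k+1}]$, $$|I_0(s,\xi)|\lesssim\varepsilon_1^3\,2^{-3m/2}\,2^{-10k}.$$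
   Context: $\Lambda=\sqrt{1-\Delta}$ is the Fourier multiplier with symbol $\Lambda(\xi)=\sqrt{1+|\xi|^2}$ on $\mathbb{R}^3$; $\widehat g(\xi)=\int e^{-ix\cdot\xi}g(x)\,dx$. $\varphi:\mathbb{R}\to[0,1]$ is a fixed even smooth function supported in $[-8/5,8/5]$ and equal to $1$ on $[-5/4,5/4]$. Implicit constants are independent of $m,k,s,\xi,T,\varepsilon_1$. *)

theory Defs
  imports "HOL-Analysis.Analysis" "HOL-Probability.Essential_Supremum"
begin

type_synonym R3 = "real^3"

definition Lam_sym :: "R3 \<Rightarrow> real" where
  "Lam_sym \<xi> = sqrt (1 + (norm \<xi>)^2)"

definition ft :: "(R3 \<Rightarrow> complex) \<Rightarrow> R3 \<Rightarrow> complex" where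
  "ft g \<xi> = (LINT x|lborel. cis (- (x \<bullet> \<xi>)) * g x)"

definition square_integrable :: "(R3 \<Rightarrow> complex) \<Rightarrow> bool" where
  "square_integrable g \<longleftrightarrow> g \<in> borel_measurable lborel \<and> integrable lborel (\<lambda>x. (cmod (g x))^2)"

definition L2fourier :: "(R3 \<Rightarrow> complex) \<Rightarrow> (R3 \<Rightarrow> complex) \<Rightarrow> bool" where
  "L2fourier g h \<longleftrightarrow> square_integrable g \<and> h \<in> borel_measurable lborel \<and>
     ((\<lambda>R. \<integral>\<^sup>+ \<xi>. ennreal ((cmod (ft (\<lambda>x. indicator (cball 0 R) x * g x) \<xi> - h \<xi>))^2) \<partial>lborel)
        \<longlongrightarrow> 0) at_top"

text \<open>A representative of the L^2 Fourier transform (determined up to null sets).\<close>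
definition hat :: "(R3 \<Rightarrow> complex) \<Rightarrow> R3 \<Rightarrow> complex" where
  "hat g = (SOME h. L2fourier g h)"

definition in_H :: "nat \<Rightarrow> (R3 \<Rightarrow> complex) \<Rightarrow> bool" where
  "in_H n g \<longleftrightarrow> square_integrable g \<and> (\<exists>h. L2fourier g h) \<and>
     integrable lborel (\<lambda>\<xi>. (1 + (norm \<xi>)^2)^n * (cmod (hat g \<xi>))^2)"

text \<open>Sobolev norm ||g||_{H^n} = ||Lambda^n g||_{L^2} (Plancherel with the given FT convention).\<close>
definition Hnorm :: "nat \<Rightarrow> (R3 \<Rightarrow> complex) \<Rightarrow> real" where
  "Hnorm n g = sqrt ((2*pi) powr (-3) *
     (LINT \<xi>|lborel. (1 + (norm \<xi>)^2)^n * (cmod (hat g \<xi>))^2))"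

definition Hnorm_vec :: "nat \<Rightarrow> 'i set \<Rightarrow> ('i \<Rightarrow> R3 \<Rightarrow> complex) \<Rightarrow> real" where
  "Hnorm_vec n I gs = sqrt (\<Sum>i\<in>I. (Hnorm n (gs i))^2)"

fun smoothk :: "nat \<Rightarrow> (R3 \<Rightarrow> complex) \<Rightarrow> bool" where
  "smoothk 0 g = continuous_on UNIV g"
| "smoothk (Suc k) g = ((\<forall>x. g differentiable (at x)) \<and>
     (\<forall>i. smoothk k (\<lambda>x. frechet_derivative g (at x) (axis i 1))))"

definition test_fun :: "(R3 \<Rightarrow> complex) \<Rightarrow> bool" where
  "test_fun b \<longleftrightarrow> (\<forall>k. smoothk k b) \<and> (\<exists>R. \<forall>x. norm x > R \<longrightarrow> b x = 0)"

definition Lam_op :: "(R3 \<Rightarrow> complex) \<Rightarrow> R3 \<Rightarrow> complex" where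
  "Lam_op b x = (2*pi) powr (-3) * (LINT \<xi>|lborel. cis (x \<bullet> \<xi>) * Lam_sym \<xi> * ft b \<xi>)"

definition pairing :: "(R3 \<Rightarrow> complex) \<Rightarrow> (R3 \<Rightarrow> complex) \<Rightarrow> complex" where
  "pairing g b = (LINT x|lborel. g x * b x)"

definition hartree :: "(R3 \<Rightarrow> complex) \<Rightarrow> R3 \<Rightarrow> complex" where
  "hartree g x = complex_of_real (LINT y|lborel. (cmod (g y))^2 / norm (x - y))"

text \<open>u solves i u_t - Lambda u = -(|x|^{-1} * |u|^2) u on [0,T], in the weak-in-space sense.\<close>
definition solves_hartree :: "real \<Rightarrow> (real \<Rightarrow> R3 \<Rightarrow> complex) \<Rightarrow> bool" where
  "solves_hartree T u \<longleftrightarrow> (\<forall>b. test_fun b \<longrightarrow> (\<forall>t\<in>{0..T}.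
     ((\<lambda>s. pairing (u s) b) has_vector_derivative
        (- \<i> * (pairing (u t) (Lam_op b) - pairing (\<lambda>x. hartree (u t) x * u t x) b)))
     (at t within {0..T})))"

definition cont_H :: "nat \<Rightarrow> real \<Rightarrow> (real \<Rightarrow> R3 \<Rightarrow> complex) \<Rightarrow> bool" where
  "cont_H n T u \<longleftrightarrow> (\<forall>t\<in>{0..T}. in_H n (u t)) \<and>
     (\<forall>t0\<in>{0..T}. ((\<lambda>t. Hnorm n (\<lambda>x. u t x - u t0 x)) \<longlongrightarrow> 0) (at t0 within {0..T}))"

definition phase :: "R3 \<Rightarrow> R3 \<Rightarrow> R3 \<Rightarrow> real" where
  "phase \<xi> \<eta> \<sigma> = - Lam_sym \<xi> + Lam_sym (\<xi> + \<eta>) + Lam_sym (\<xi> + \<sigma>) - Lam_sym (\<xi> + \<eta> + \<sigma>)"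

definition I0 :: "(real \<Rightarrow> real) \<Rightarrow> (R3 \<Rightarrow> complex) \<Rightarrow> int \<Rightarrow> real \<Rightarrow> R3 \<Rightarrow> complex" where
  "I0 \<phi> F l0 s \<xi> = \<i> * complex_of_real (2 * (2*pi) powr (-5)) *
     (LINT z|(lborel :: (R3 \<times> R3) measure).
        cis (s * phase \<xi> (fst z) (snd z)) *
        complex_of_real ((norm (fst z)) powr (-2) * \<phi> (norm (fst z) / 2 powr l0)) *
        F (\<xi> + fst z) * F (\<xi> + snd z) * cnj (F (\<xi> + fst z + snd z)))"

definition smooth_real :: "(real \<Rightarrow> real) \<Rightarrow> bool" where
  "smooth_real \<phi> \<longleftrightarrow> (\<forall>n x. ((deriv ^^ n) \<phi>) differentiable (at x))"

end

theory Submission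
  imports Defs
begin


lemma nn_trans:
  fixes h :: "R3 \<Rightarrow> ennreal"
  assumes [measurable]: "h \<in> borel_measurable lborel"
  shows "(\<integral>\<^sup>+\<eta>. h (c + \<eta>) \<partial>lborel) = (\<integral>\<^sup>+\<zeta>. h \<zeta> \<partial>lborel)"
proof -
  have "(\<integral>\<^sup>+\<zeta>. h \<zeta> \<partial>lborel) = (\<integral>\<^sup>+\<zeta>. h \<zeta> \<partial>(distr lborel borel ((+) c)))"
    by (simp add: lborel_distr_plus)
  also have "\<dots> = (\<integral>\<^sup>+\<eta>. h (c + \<eta>) \<partial>lborel)"
    by (subst nn_integral_distr) auto
  finally show ?thesis by simp
qed

lemma AE_trans:
  fixes P :: "R3 \<Rightarrow> bool"
  assumes [measurable]: "Measurable.pred lborel P" and "AE \<zeta> in lborel. P \<zeta>"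
  shows "AE \<eta> in lborel. P (c + \<eta>)"
proof -
  have "AE \<zeta> in distr lborel borel ((+) c). P \<zeta>" by (subst lborel_distr_plus) (rule assms(2))
  then show ?thesis by (subst (asm) AE_distr_iff) auto
qed

lemma ft_meas:
  assumes g[measurable]: "g \<in> borel_measurable lborel"
  shows "ft (\<lambda>x. indicator (cball 0 R) x * g x) \<in> borel_measurable lborel"
proof -
  have gb[measurable]: "g \<in> borel_measurable borel" using g by simp
  have "continuous_on UNIV (\<lambda>x::R3\<times>R3. cis (- (snd x \<bullet> fst x)))"
    by (intro continuous_intros)
  hence c[measurable]: "(\<lambda>x::R3\<times>R3. cis (- (snd x \<bullet> fst x))) \<in> borel_measurable (borel \<Otimes>\<^sub>M borel)"
    by (simp add: borel_prod borel_measurable_continuous_onI)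
  have "(\<lambda>y. indicator (cball 0 R) y * g y) \<in> borel_measurable lborel"
    by (intro borel_measurable_times borel_measurable_indicator g) auto
  hence [measurable]: "(\<lambda>x::R3\<times>R3. indicator (cball 0 R) (snd x) * g (snd x)) \<in> borel_measurable (lborel \<Otimes>\<^sub>M lborel)"
    by (rule measurable_compose[OF measurable_snd])
  show ?thesis
  unfolding ft_def
  by (rule lborel.borel_measurable_lebesgue_integral) measurable
qed

lemma L2_unique:
  assumes "L2fourier g h1" "L2fourier g h2"
  shows "AE \<xi> in lborel. h1 \<xi> = h2 \<xi>"
proof -
  define G where "G R = ft (\<lambda>x. indicator (cball 0 R) x * g x)" for R
  have m1[measurable]: "h1 \<in> borel_measurable lborel" and m2[measurable]: "h2 \<in> borel_measurable lborel"
    using assms by (auto simp: L2fourier_def)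
  have [measurable]: "G R \<in> borel_measurable lborel" for R
    unfolding G_def using assms by (intro ft_meas) (auto simp: L2fourier_def square_integrable_def)
  have t1: "((\<lambda>R. \<integral>\<^sup>+ \<xi>. ennreal ((cmod (G R \<xi> - h1 \<xi>))^2) \<partial>lborel) \<longlongrightarrow> 0) at_top"
   and t2: "((\<lambda>R. \<integral>\<^sup>+ \<xi>. ennreal ((cmod (G R \<xi> - h2 \<xi>))^2) \<partial>lborel) \<longlongrightarrow> 0) at_top"
    using assms by (auto simp: L2fourier_def G_def)
  have le: "(\<integral>\<^sup>+ \<xi>. ennreal ((cmod (h1 \<xi> - h2 \<xi>))^2) \<partial>lborel)
      \<le> 2 * (\<integral>\<^sup>+ \<xi>. ennreal ((cmod (G R \<xi> - h1 \<xi>))^2) \<partial>lborel)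
       + 2 * (\<integral>\<^sup>+ \<xi>. ennreal ((cmod (G R \<xi> - h2 \<xi>))^2) \<partial>lborel)" for R
  proof -
    have "(\<integral>\<^sup>+ \<xi>. ennreal ((cmod (h1 \<xi> - h2 \<xi>))^2) \<partial>lborel)
      \<le> (\<integral>\<^sup>+ \<xi>. 2 * ennreal ((cmod (G R \<xi> - h1 \<xi>))^2) + 2 * ennreal ((cmod (G R \<xi> - h2 \<xi>))^2) \<partial>lborel)"
    proof (rule nn_integral_mono)
      fix \<xi>
      have "cmod (h1 \<xi> - h2 \<xi>) \<le> cmod (G R \<xi> - h1 \<xi>) + cmod (G R \<xi> - h2 \<xi>)"
        using norm_triangle_ineq4[of "G R \<xi> - h2 \<xi>" "G R \<xi> - h1 \<xi>"] by (simp add: add.commute)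
      hence "(cmod (h1 \<xi> - h2 \<xi>))^2 \<le> (cmod (G R \<xi> - h1 \<xi>) + cmod (G R \<xi> - h2 \<xi>))^2"
        by (simp add: power_mono)
      also have "\<dots> \<le> 2 * (cmod (G R \<xi> - h1 \<xi>))^2 + 2 * (cmod (G R \<xi> - h2 \<xi>))^2"
        by (simp add: power2_sum) (smt (verit) sum_squares_bound)
      finally have "ennreal ((cmod (h1 \<xi> - h2 \<xi>))^2) \<le> ennreal (2 * (cmod (G R \<xi> - h1 \<xi>))^2 + 2 * (cmod (G R \<xi> - h2 \<xi>))^2)"
        by (rule ennreal_leI)
      also have "\<dots> = 2 * ennreal ((cmod (G R \<xi> - h1 \<xi>))^2) + 2 * ennreal ((cmod (G R \<xi> - h2 \<xi>))^2)"
        by (simp add: ennreal_plus ennreal_mult)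
      finally show "ennreal ((cmod (h1 \<xi> - h2 \<xi>))^2) \<le> 2 * ennreal ((cmod (G R \<xi> - h1 \<xi>))^2) + 2 * ennreal ((cmod (G R \<xi> - h2 \<xi>))^2)" .
    qed
    also have "\<dots> = 2 * (\<integral>\<^sup>+ \<xi>. ennreal ((cmod (G R \<xi> - h1 \<xi>))^2) \<partial>lborel)
       + 2 * (\<integral>\<^sup>+ \<xi>. ennreal ((cmod (G R \<xi> - h2 \<xi>))^2) \<partial>lborel)"
      by (subst nn_integral_add) (auto simp: nn_integral_cmult)
    finally show ?thesis .
  qed
  have "((\<lambda>R. 2 * (\<integral>\<^sup>+ \<xi>. ennreal ((cmod (G R \<xi> - h1 \<xi>))^2) \<partial>lborel)
       + 2 * (\<integral>\<^sup>+ \<xi>. ennreal ((cmod (G R \<xi> - h2 \<xi>))^2) \<partial>lborel)) \<longlongrightarrow> 2*0 + 2*0) at_top"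
    by (intro tendsto_intros t1 t2) auto
  hence "(\<integral>\<^sup>+ \<xi>. ennreal ((cmod (h1 \<xi> - h2 \<xi>))^2) \<partial>lborel) \<le> 2*0+2*0"
    by (intro tendsto_lowerbound[where F=at_top]) (auto intro: always_eventually le)
  hence "(\<integral>\<^sup>+ \<xi>. ennreal ((cmod (h1 \<xi> - h2 \<xi>))^2) \<partial>lborel) = 0" by simp
  hence "AE \<xi> in lborel. ennreal ((cmod (h1 \<xi> - h2 \<xi>))^2) = 0"
    by (subst (asm) nn_integral_0_iff_AE) auto
  thus ?thesis by eventually_elim simp
qed

lemma One_inner_Basis: "(i::'a::euclidean_space) \<in> Basis \<Longrightarrow> One \<bullet> i = 1"
  by (simp add: inner_sum_left sum.If_cases inner_Basis)

lemma vol_cball: 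
  assumes "r \<ge> 0"
  shows "emeasure lborel (cball (0::R3) r) \<le> ennreal (8 * r^3)"
proof -
  have sub: "cball (0::R3) r \<subseteq> cbox (- (r *\<^sub>R One)) (r *\<^sub>R One)"
  proof
    fix x :: R3 assume "x \<in> cball 0 r"
    hence n: "norm x \<le> r" by simp
    have "- r \<le> x \<bullet> b \<and> x \<bullet> b \<le> r" if "b \<in> Basis" for b
      using Basis_le_norm[OF that, of x] n by linarith
    thus "x \<in> cbox (- (r *\<^sub>R One)) (r *\<^sub>R One)"
      by (auto simp: mem_box inner_commute[of _ One])
  qed
  have "emeasure lborel (cball (0::R3) r) \<le> emeasure lborel (cbox (- (r *\<^sub>R One)) (r *\<^sub>R One::R3))"
    by (intro emeasure_mono sub) auto
  also have "\<dots> = ennreal (\<Prod>b\<in>(Basis::R3 set). 2 * r)"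
  proof -
    have "(r *\<^sub>R One - - (r *\<^sub>R One)) \<bullet> b = 2 * r" if "b \<in> (Basis::R3 set)" for b
      using that by (simp only: diff_minus_eq_add inner_add_left inner_scaleR_left One_inner_Basis)
    note fb = this
    have le: "\<forall>b\<in>(Basis::R3 set). (- (r *\<^sub>R One)) \<bullet> b \<le> (r *\<^sub>R One) \<bullet> b"
      using assms by (simp add: One_inner_Basis)
    have "emeasure lborel (cbox (- (r *\<^sub>R One)) (r *\<^sub>R One::R3)) = ennreal (\<Prod>b\<in>(Basis::R3 set). (r *\<^sub>R One - - (r *\<^sub>R One)) \<bullet> b)"
      by (simp only: emeasure_lborel_cbox_eq if_P[OF le])
    also have "(\<Prod>b\<in>(Basis::R3 set). (r *\<^sub>R One - - (r *\<^sub>R One)) \<bullet> b) = (\<Prod>b\<in>(Basis::R3 set). 2 * r)"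
      by (rule prod.cong) (auto simp only: fb)
    finally show ?thesis .
  qed
  also have "(\<Prod>b\<in>(Basis::R3 set). 2 * r) = 8 * r^3"
    by (simp add: power3_eq_cube)
  finally show ?thesis by simp
qed

lemma enn_le_suminf: "(f i::ennreal) \<le> (\<Sum>n. f n)"
  using ennreal_suminf_lessD[of f "f i" i] by (metis not_le order_less_irrefl)

lemma exists_shell:
  fixes t :: real
  assumes "0 < t" "t \<le> \<tau>"
  shows "\<exists>n. t \<le> \<tau> * (1/2)^n \<and> \<tau> * (1/2)^(Suc n) < t"
proof -
  define P where "P n \<longleftrightarrow> \<tau> * (1/2)^n < t" for n :: nat
  have "\<not> P 0" using assms by (simp add: P_def)
  moreover obtain n where "(1/2::real)^n < t / \<tau>"
    using real_arch_pow_inv[of "t/\<tau>" "1/2"] assms by auto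
  hence "P n" using assms by (simp add: P_def field_simps)
  ultimately obtain n where "\<not> P n" "P (Suc n)" using exists_least_lemma[of P] by blast
  thus ?thesis by (auto simp: P_def not_less)
qed

lemma sing_int:
  assumes "\<tau> > 0"
  shows "(\<integral>\<^sup>+\<eta>. ennreal (norm (\<eta>::R3) powr (-2) * indicator (cball 0 \<tau>) \<eta>) \<partial>lborel) \<le> ennreal (64 * \<tau>)"
proof -
  define r where "r n = \<tau> * (1/2)^n" for n :: nat
  have rpos: "r n > 0" for n using assms by (simp add: r_def)
  have pw: "ennreal (norm \<eta> powr (-2) * indicator (cball 0 \<tau>) \<eta>)
     \<le> (\<Sum>n. ennreal (4 / (r n)^2) * indicator (cball 0 (r n)) \<eta>)" for \<eta> :: R3
  proof (cases "\<eta> = 0 \<or> norm \<eta> > \<tau>")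
    case True thus ?thesis by auto
  next
    case False
    hence "0 < norm \<eta>" "norm \<eta> \<le> \<tau>" by auto
    then obtain n where n: "norm \<eta> \<le> r n" "r (Suc n) < norm \<eta>"
      using exists_shell[of "norm \<eta>" \<tau>] by (auto simp: r_def)
    have rs: "r (Suc n) = r n / 2" by (simp add: r_def)
    have "norm \<eta> powr (-2) = 1 / (norm \<eta>)^2"
      using \<open>0 < norm \<eta>\<close> by (simp add: powr_minus powr_realpow divide_inverse)
    also have "\<dots> \<le> 1 / (r n / 2)^2"
      using n rs rpos[of "Suc n"] by (intro divide_left_mono power_mono mult_pos_pos) auto
    also have "\<dots> = 4 / (r n)^2" by (simp add: power_divide)
    finally have "ennreal (norm \<eta> powr (-2) * indicator (cball 0 \<tau>) \<eta>) \<le> ennreal (4 / (r n)^2) * indicator (cball 0 (r n)) \<eta>"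
      using n \<open>norm \<eta> \<le> \<tau>\<close> by (auto intro: ennreal_leI)
    also have "\<dots> \<le> (\<Sum>n. ennreal (4 / (r n)^2) * indicator (cball 0 (r n)) \<eta>)"
      by (rule enn_le_suminf)
    finally show ?thesis .
  qed
  have "(\<integral>\<^sup>+\<eta>. ennreal (norm (\<eta>::R3) powr (-2) * indicator (cball 0 \<tau>) \<eta>) \<partial>lborel)
     \<le> (\<integral>\<^sup>+\<eta>. (\<Sum>n. ennreal (4 / (r n)^2) * indicator (cball 0 (r n)) (\<eta>::R3)) \<partial>lborel)"
    apply (rule nn_integral_mono) using pw by blast
  also have "\<dots> = (\<Sum>n. \<integral>\<^sup>+\<eta>. ennreal (4 / (r n)^2) * indicator (cball (0::R3) (r n)) \<eta> \<partial>lborel)"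
    by (rule nn_integral_suminf) (intro borel_measurable_times_ennreal measurable_const borel_measurable_indicator, auto)
  also have "\<dots> = (\<Sum>n. ennreal (4 / (r n)^2) * emeasure lborel (cball (0::R3) (r n)))"
    by (simp add: nn_integral_cmult_indicator)
  also have "\<dots> \<le> (\<Sum>n. ennreal (32 * \<tau> * (1/2)^n))"
  proof (intro suminf_le allI)
    fix n
    have "ennreal (4 / (r n)^2) * emeasure lborel (cball (0::R3) (r n)) \<le> ennreal (4 / (r n)^2) * ennreal (8 * (r n)^3)"
      using rpos[of n] by (intro mult_left_mono vol_cball) auto
    also have "\<dots> = ennreal (32 * r n)"
      using rpos[of n] by (simp add: ennreal_mult[symmetric] power2_eq_square power3_eq_cube)
    finally show "ennreal (4 / (r n)^2) * emeasure lborel (cball (0::R3) (r n)) \<le> ennreal (32 * \<tau> * (1/2)^n)"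
      by (simp add: r_def mult.assoc)
  qed auto
  also have "\<dots> = ennreal (64 * \<tau>)"
  proof -
    have "(\<lambda>n. 32 * \<tau> * (1/2::real)^n) sums (32 * \<tau> * 2)"
      using geometric_sums[of "1/2::real"] by (intro sums_mult) simp
    hence "(\<Sum>n. ennreal (32 * \<tau> * (1/2)^n)) = ennreal (32 * \<tau> * 2)"
      using assms by (intro suminf_ennreal_eq) auto
    thus ?thesis by simp
  qed
  finally show ?thesis .
qed

lemma I0_le:
  fixes F :: "R3 \<Rightarrow> complex"
  assumes phi: "\<And>x. 0 \<le> \<phi> x"
  shows "ennreal (cmod (I0 \<phi> F l0 s \<xi>)) \<le> ennreal (2 * (2*pi) powr (-5)) *
    (\<integral>\<^sup>+z. ennreal (norm (fst z) powr (-2) * \<phi> (norm (fst z) / 2 powr l0) * cmod (F (\<xi> + fst z))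
        * cmod (F (\<xi> + snd z)) * cmod (F (\<xi> + fst z + snd z))) \<partial>(lborel :: (R3 \<times> R3) measure))"
proof -
  define h where "h z = cis (s * phase \<xi> (fst z) (snd z)) *
        complex_of_real ((norm (fst z)) powr (-2) * \<phi> (norm (fst z) / 2 powr l0)) *
        F (\<xi> + fst z) * F (\<xi> + snd z) * cnj (F (\<xi> + fst z + snd z))" for z :: "R3 \<times> R3"
  have nh: "norm (h z) = norm (fst z) powr (-2) * \<phi> (norm (fst z) / 2 powr l0) * cmod (F (\<xi> + fst z))
        * cmod (F (\<xi> + snd z)) * cmod (F (\<xi> + fst z + snd z))" for z
    using phi[of "norm (fst z) / 2 powr l0"] by (simp add: h_def norm_mult abs_mult)
  have "norm (LINT z|(lborel :: (R3 \<times> R3) measure). h z) \<le> (\<integral>\<^sup>+z. norm (h z) \<partial>(lborel :: (R3 \<times> R3) measure))"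
  proof (cases "integrable (lborel :: (R3 \<times> R3) measure) h")
    case True thus ?thesis by (rule integral_norm_bound_ennreal)
  next
    case False thus ?thesis by (simp add: not_integrable_integral_eq)
  qed
  hence "ennreal (2 * (2*pi) powr (-5) * norm (LINT z|(lborel :: (R3 \<times> R3) measure). h z))
      \<le> ennreal (2 * (2*pi) powr (-5)) * (\<integral>\<^sup>+z. norm (h z) \<partial>(lborel :: (R3 \<times> R3) measure))"
    by (simp add: ennreal_mult mult_left_mono)
  moreover have "cmod (I0 \<phi> F l0 s \<xi>) = 2 * (2*pi) powr (-5) * norm (LINT z|(lborel :: (R3 \<times> R3) measure). h z)"
    unfolding I0_def h_def by (simp add: norm_mult)
  ultimately show ?thesis by (simp add: nh)
qed

lemma amgm: "(a::real) * b \<le> a^2/2 + b^2/2"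
proof -
  have "a^2/2 + b^2/2 - a*b = (a-b)^2/2" by (simp add: power2_eq_square algebra_simps)
  moreover have "0 \<le> (a-b)^2/2" by simp
  ultimately show ?thesis by linarith
qed

lemma enn_half: "0 \<le> x \<Longrightarrow> ennreal (x / 2) = ennreal x / 2"
  using divide_ennreal[of x 2] by simp

lemma enn_amgm: "ennreal ((a::real) * b) \<le> ennreal (a^2) / 2 + ennreal (b^2) / 2"
proof -
  have "ennreal (a * b) \<le> ennreal (a^2/2 + b^2/2)" by (rule ennreal_leI[OF amgm])
  also have "\<dots> = ennreal (a^2/2) + ennreal (b^2/2)" by (rule ennreal_plus) auto
  also have "\<dots> = ennreal (a^2) / 2 + ennreal (b^2) / 2" by (simp only: enn_half zero_le_power2)
  finally show ?thesis .
qed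

lemma enn_halves: "(x::ennreal)/2 + x/2 = x"
proof -
  have "x/2 + x/2 = (x * 2) / 2" by (simp add: add_divide_distrib_ennreal[symmetric] mult_2_right)
  also have "\<dots> = x" by (rule mult_divide_eq_ennreal) auto
  finally show ?thesis .
qed

lemma meas_G:
  fixes F :: "R3 \<Rightarrow> complex"
  assumes Fm: "F \<in> borel_measurable borel" and phim: "\<phi> \<in> borel_measurable borel"
  shows "(\<lambda>z::R3\<times>R3. ennreal (norm (fst z) powr (-2) * \<phi> (norm (fst z) / 2 powr l0) * cmod (F (\<xi> + fst z))
        * cmod (F (\<xi> + snd z)) * cmod (F (\<xi> + fst z + snd z)))) \<in> borel_measurable (lborel \<Otimes>\<^sub>M lborel)"
proof -
  have cF: "(\<lambda>z::R3\<times>R3. cmod (F (h z))) \<in> borel_measurable borel" if "continuous_on UNIV h" for h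
    by (rule borel_measurable_continuous_on[where f=cmod]) (auto intro: continuous_intros measurable_compose[OF borel_measurable_continuous_onI[OF that] Fm])
  have c1: "(\<lambda>z::R3\<times>R3. cmod (F (\<xi> + fst z))) \<in> borel_measurable borel" by (rule cF) (intro continuous_intros)
  have c2: "(\<lambda>z::R3\<times>R3. cmod (F (\<xi> + snd z))) \<in> borel_measurable borel" by (rule cF) (intro continuous_intros)
  have c3: "(\<lambda>z::R3\<times>R3. cmod (F (\<xi> + fst z + snd z))) \<in> borel_measurable borel" by (rule cF) (intro continuous_intros)
  have nf: "(\<lambda>z::R3\<times>R3. norm (fst z)) \<in> borel_measurable borel"
    by (intro borel_measurable_continuous_onI continuous_intros)
  have p: "(\<lambda>z::R3\<times>R3. norm (fst z) powr (-2)) \<in> borel_measurable borel"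
    by (rule powr_real_measurable[OF nf]) auto
  have q: "(\<lambda>z::R3\<times>R3. norm (fst z) / 2 powr l0) \<in> borel_measurable borel"
    by (intro borel_measurable_continuous_onI continuous_intros) auto
  have ph: "(\<lambda>z::R3\<times>R3. \<phi> (norm (fst z) / 2 powr l0)) \<in> borel_measurable borel"
    by (rule measurable_compose[OF q phim])
  have "(\<lambda>z::R3\<times>R3. norm (fst z) powr (-2) * \<phi> (norm (fst z) / 2 powr l0) * cmod (F (\<xi> + fst z))
        * cmod (F (\<xi> + snd z)) * cmod (F (\<xi> + fst z + snd z))) \<in> borel_measurable borel"
    by (intro borel_measurable_times p ph c1 c2 c3)
  hence "(\<lambda>z::R3\<times>R3. ennreal (norm (fst z) powr (-2) * \<phi> (norm (fst z) / 2 powr l0) * cmod (F (\<xi> + fst z))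
        * cmod (F (\<xi> + snd z)) * cmod (F (\<xi> + fst z + snd z)))) \<in> borel_measurable borel"
    by (rule measurable_compose[OF _ measurable_ennreal])
  thus ?thesis by (simp add: lborel_prod)
qed

lemma J_le:
  fixes F :: "R3 \<Rightarrow> complex"
  assumes Fm[measurable]: "F \<in> borel_measurable borel" and phim[measurable]: "\<phi> \<in> borel_measurable borel"
    and phi: "\<And>x. 0 \<le> \<phi> x"
  shows "(\<integral>\<^sup>+z. ennreal (norm (fst z) powr (-2) * \<phi> (norm (fst z) / 2 powr l0) * cmod (F (\<xi> + fst z))
        * cmod (F (\<xi> + snd z)) * cmod (F (\<xi> + fst z + snd z))) \<partial>(lborel :: (R3 \<times> R3) measure))
    \<le> (\<integral>\<^sup>+\<zeta>. ennreal ((cmod (F \<zeta>))^2) \<partial>lborel) *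
       (\<integral>\<^sup>+\<eta>. ennreal (norm \<eta> powr (-2) * \<phi> (norm \<eta> / 2 powr l0) * cmod (F (\<xi> + \<eta>))) \<partial>lborel)"
    (is "?J \<le> ?L * ?Y")
proof -
  define g where "g \<eta> = norm \<eta> powr (-2) * \<phi> (norm \<eta> / 2 powr l0) * cmod (F (\<xi> + \<eta>))" for \<eta> :: R3
  have g0: "g \<eta> \<ge> 0" for \<eta> using phi by (simp add: g_def)
  have Fm2[measurable]: "(\<lambda>\<zeta>. ennreal ((cmod (F \<zeta>))^2)) \<in> borel_measurable lborel" by measurable
  have "?J = (\<integral>\<^sup>+z. ennreal (norm (fst z) powr (-2) * \<phi> (norm (fst z) / 2 powr l0) * cmod (F (\<xi> + fst z))
        * cmod (F (\<xi> + snd z)) * cmod (F (\<xi> + fst z + snd z))) \<partial>(lborel \<Otimes>\<^sub>M lborel))"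
    by (simp add: lborel_prod)
  also have "\<dots> = (\<integral>\<^sup>+\<eta>. \<integral>\<^sup>+\<sigma>. ennreal (norm \<eta> powr (-2) * \<phi> (norm \<eta> / 2 powr l0) * cmod (F (\<xi> + \<eta>))
        * cmod (F (\<xi> + \<sigma>)) * cmod (F (\<xi> + \<eta> + \<sigma>))) \<partial>lborel \<partial>lborel)"
    using lborel.nn_integral_fst[OF meas_G[OF Fm phim, of l0 \<xi>]] by (simp add: add.assoc)
  also have "\<dots> = (\<integral>\<^sup>+\<eta>. ennreal (g \<eta>) * \<integral>\<^sup>+\<sigma>. ennreal (cmod (F (\<xi> + \<sigma>)) * cmod (F (\<xi> + \<eta> + \<sigma>))) \<partial>lborel \<partial>lborel)"
  proof (rule nn_integral_cong)
    fix \<eta> :: R3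
    have "(\<integral>\<^sup>+\<sigma>. ennreal (norm \<eta> powr (-2) * \<phi> (norm \<eta> / 2 powr l0) * cmod (F (\<xi> + \<eta>))
        * cmod (F (\<xi> + \<sigma>)) * cmod (F (\<xi> + \<eta> + \<sigma>))) \<partial>lborel)
       = (\<integral>\<^sup>+\<sigma>. ennreal (g \<eta>) * ennreal (cmod (F (\<xi> + \<sigma>)) * cmod (F (\<xi> + \<eta> + \<sigma>))) \<partial>lborel)"
      using g0[of \<eta>] by (intro nn_integral_cong) (simp add: g_def ennreal_mult[symmetric] mult.assoc)
    also have "\<dots> = ennreal (g \<eta>) * \<integral>\<^sup>+\<sigma>. ennreal (cmod (F (\<xi> + \<sigma>)) * cmod (F (\<xi> + \<eta> + \<sigma>))) \<partial>lborel"
      by (rule nn_integral_cmult) measurable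
    finally show "(\<integral>\<^sup>+\<sigma>. ennreal (norm \<eta> powr (-2) * \<phi> (norm \<eta> / 2 powr l0) * cmod (F (\<xi> + \<eta>))
        * cmod (F (\<xi> + \<sigma>)) * cmod (F (\<xi> + \<eta> + \<sigma>))) \<partial>lborel)
       = ennreal (g \<eta>) * \<integral>\<^sup>+\<sigma>. ennreal (cmod (F (\<xi> + \<sigma>)) * cmod (F (\<xi> + \<eta> + \<sigma>))) \<partial>lborel" .
  qed
  also have "\<dots> \<le> (\<integral>\<^sup>+\<eta>. ennreal (g \<eta>) * ?L \<partial>lborel)"
  proof (rule nn_integral_mono)
    fix \<eta> :: R3
    have "(\<integral>\<^sup>+\<sigma>. ennreal (cmod (F (\<xi> + \<sigma>)) * cmod (F (\<xi> + \<eta> + \<sigma>))) \<partial>lborel)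
        \<le> (\<integral>\<^sup>+\<sigma>. ennreal ((cmod (F (\<xi> + \<sigma>)))^2) / 2 + ennreal ((cmod (F ((\<xi> + \<eta>) + \<sigma>)))^2) / 2 \<partial>lborel)"
    proof (intro nn_integral_mono)
      fix \<sigma>
      show "ennreal (cmod (F (\<xi> + \<sigma>)) * cmod (F (\<xi> + \<eta> + \<sigma>))) \<le> ennreal ((cmod (F (\<xi> + \<sigma>)))^2) / 2 + ennreal ((cmod (F ((\<xi> + \<eta>) + \<sigma>)))^2) / 2"
        by (rule enn_amgm)
    qed
    also have "\<dots> = (\<integral>\<^sup>+\<sigma>. ennreal ((cmod (F (\<xi> + \<sigma>)))^2) \<partial>lborel) / 2 + (\<integral>\<^sup>+\<sigma>. ennreal ((cmod (F ((\<xi> + \<eta>) + \<sigma>)))^2) \<partial>lborel) / 2"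
      by (subst nn_integral_add) (auto simp: nn_integral_divide)
    also have "\<dots> = ?L / 2 + ?L / 2"
      by (simp only: nn_trans[OF Fm2])
    also have "\<dots> = ?L" by (rule enn_halves) 
    finally have "(\<integral>\<^sup>+\<sigma>. ennreal (cmod (F (\<xi> + \<sigma>)) * cmod (F (\<xi> + \<eta> + \<sigma>))) \<partial>lborel) \<le> ?L" .
    thus "ennreal (g \<eta>) * (\<integral>\<^sup>+\<sigma>. ennreal (cmod (F (\<xi> + \<sigma>)) * cmod (F (\<xi> + \<eta> + \<sigma>))) \<partial>lborel) \<le> ennreal (g \<eta>) * ?L"
      by (rule mult_left_mono) auto
  qed
  also have "\<dots> = ?L * ?Y"
    by (subst nn_integral_multc) (auto simp: g_def mult.commute)
  finally show ?thesis .
qed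

lemma mFt: "F \<in> borel_measurable borel \<Longrightarrow> (\<lambda>\<eta>::R3. cmod (F (\<xi> + \<eta>))) \<in> borel_measurable borel"
  by (rule borel_measurable_continuous_on[where f=cmod]) (auto intro: continuous_intros measurable_compose[OF borel_measurable_continuous_onI])

lemma mind: "(\<lambda>\<eta>::R3. indicator (cball 0 r) \<eta> :: real) \<in> borel_measurable borel"
  by (intro borel_measurable_indicator) auto

lemma weight_bound:
  fixes F :: "R3 \<Rightarrow> complex"
  assumes Fm: "F \<in> borel_measurable borel" and N: "N > 0"
    and W: "(\<integral>\<^sup>+\<zeta>. ennreal ((1 + (norm \<zeta>)^2)^N * (cmod (F \<zeta>))^2) \<partial>lborel) \<le> ennreal Wb"
    and \<rho>: "0 \<le> \<rho>" "\<rho> \<le> 16/5" and Wb0: "Wb \<ge> 0"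
  shows "(\<integral>\<^sup>+\<eta>. ennreal ((indicator (cball 0 \<rho>) \<eta> * cmod (F (\<xi> + \<eta>)))^2) \<partial>lborel)
     \<le> ennreal ((21/5)^(2*N) * 2^N / (1 + norm \<xi>)^(2*N) * Wb)"
proof -
  define A where "A = 1 + norm \<xi>"
  have A1: "A \<ge> 1" by (simp add: A_def)
  define c where "c = (21/5::real)^(2*N) * 2^N / A^(2*N)"
  have c0: "c \<ge> 0" using A1 by (simp add: c_def)
  have pw: "(indicator (cball 0 \<rho>) \<eta> * cmod (F (\<xi> + \<eta>)))^2 \<le> c * ((1 + (norm (\<xi> + \<eta>))^2)^N * (cmod (F (\<xi> + \<eta>)))^2)" for \<eta> :: R3
  proof (cases "norm \<eta> \<le> \<rho>")
    case False thus ?thesis using c0 by (simp add: indicator_def)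
  next
    case True
    define z where "z = norm (\<xi> + \<eta>)"
    have z0: "z \<ge> 0" by (simp add: z_def)
    have "A \<le> (1 + z) * (1 + norm \<eta>)"
    proof -
      have "norm \<xi> \<le> z + norm \<eta>" unfolding z_def using norm_triangle_ineq4[of "\<xi> + \<eta>" \<eta>] by simp
      thus ?thesis unfolding A_def using z0 by (simp add: algebra_simps) (smt (verit) mult_nonneg_nonneg norm_ge_zero)
    qed
    also have "\<dots> \<le> (1 + z) * (21/5)" using True \<rho> z0 by (intro mult_left_mono) auto
    finally have "A \<le> 21/5 * (1 + z)" by simp
    hence "A^(2*N) \<le> (21/5 * (1 + z))^(2*N)" using A1 by (intro power_mono) auto
    also have "\<dots> = (21/5)^(2*N) * ((1+z)^2)^N" by (simp only: power_mult_distrib power_mult)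
    also have "\<dots> \<le> (21/5)^(2*N) * (2 * (1 + z^2))^N"
    proof -
      have "2 * (1 + z^2) - (1+z)^2 = (z - 1)^2" by (simp add: power2_eq_square algebra_simps)
      moreover have "0 \<le> (z - 1)^2" by simp
      ultimately have "(1+z)^2 \<le> 2 * (1 + z^2)" by linarith
      thus ?thesis by (intro mult_left_mono power_mono) auto
    qed
    also have "\<dots> = (21/5)^(2*N) * 2^N * (1 + z^2)^N" by (simp only: power_mult_distrib mult.assoc)
    finally have "A^(2*N) \<le> (21/5)^(2*N) * 2^N * (1 + z^2)^N" .
    hence "1 \<le> c * (1 + z^2)^N" using A1 by (simp add: c_def field_simps)
    hence "(cmod (F (\<xi> + \<eta>)))^2 \<le> c * (1 + z^2)^N * (cmod (F (\<xi> + \<eta>)))^2"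
      by (metis mult_left_mono mult_1 zero_le_power2 mult.commute)
    thus ?thesis using True by (simp add: z_def indicator_def mult.assoc)
  qed
  have m2: "(\<lambda>\<zeta>. ennreal ((1 + (norm \<zeta>)^2)^N * (cmod (F \<zeta>))^2)) \<in> borel_measurable lborel"
  proof -
    have "(\<lambda>\<zeta>::R3. cmod (F \<zeta>)) \<in> borel_measurable borel"
      by (rule borel_measurable_continuous_on[where f=cmod, OF _ Fm]) (intro continuous_intros)
    moreover have "(\<lambda>\<zeta>::R3. (1 + (norm \<zeta>)^2)^N) \<in> borel_measurable borel"
      by (intro borel_measurable_continuous_onI continuous_intros)
    ultimately have "(\<lambda>\<zeta>::R3. (1 + (norm \<zeta>)^2)^N * (cmod (F \<zeta>))^2) \<in> borel_measurable borel"
      by (intro borel_measurable_times) (auto intro: borel_measurable_power)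
    thus ?thesis by (simp add: measurable_compose[OF _ measurable_ennreal])
  qed
  have m2b: "(\<lambda>\<zeta>. ennreal ((1 + (norm \<zeta>)^2)^N * (cmod (F \<zeta>))^2)) \<in> borel_measurable borel"
    using m2 by simp
  have "(\<lambda>\<eta>::R3. \<xi> + \<eta>) \<in> borel_measurable borel"
    by (intro borel_measurable_continuous_onI continuous_intros)
  note tr = this
  have "(\<integral>\<^sup>+\<eta>. ennreal ((indicator (cball 0 \<rho>) \<eta> * cmod (F (\<xi> + \<eta>)))^2) \<partial>lborel)
     \<le> (\<integral>\<^sup>+\<eta>. ennreal c * ennreal ((1 + (norm (\<xi> + \<eta>))^2)^N * (cmod (F (\<xi> + \<eta>)))^2) \<partial>lborel)"
    by (intro nn_integral_mono) (simp add: ennreal_mult[symmetric] c0 ennreal_leI pw)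
  also have "\<dots> = ennreal c * (\<integral>\<^sup>+\<eta>. ennreal ((1 + (norm (\<xi> + \<eta>))^2)^N * (cmod (F (\<xi> + \<eta>)))^2) \<partial>lborel)"
    by (rule nn_integral_cmult) (simp add: measurable_compose[OF tr m2b])
  also have "\<dots> = ennreal c * (\<integral>\<^sup>+\<zeta>. ennreal ((1 + (norm \<zeta>)^2)^N * (cmod (F \<zeta>))^2) \<partial>lborel)"
    using nn_trans[OF m2, of \<xi>] by simp
  also have "\<dots> \<le> ennreal c * ennreal Wb" by (rule mult_left_mono[OF W]) simp
  also have "\<dots> = ennreal (c * Wb)" using c0 Wb0 by (simp add: ennreal_mult)
  finally show ?thesis by (simp add: c_def A_def)
qed

lemma L2piece:
  fixes F :: "R3 \<Rightarrow> complex"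
  assumes Fm: "F \<in> borel_measurable borel" and r: "r > 0" and w: "w > 0" and Qb0: "Qb \<ge> 0"
    and Q: "(\<integral>\<^sup>+\<eta>. ennreal ((indicator (cball 0 \<rho>) \<eta> * cmod (F (\<xi> + \<eta>)))^2) \<partial>lborel) \<le> ennreal Qb"
  shows "(\<integral>\<^sup>+\<eta>. ennreal (indicator (cball 0 r) \<eta> * (indicator (cball 0 \<rho>) \<eta> * cmod (F (\<xi> + \<eta>)))) \<partial>lborel)
     \<le> ennreal (w / 2 * (8 * r^3) + Qb / (2 * w))"
proof -
  define y where "y \<eta> = indicator (cball 0 \<rho>) \<eta> * cmod (F (\<xi> + \<eta>))" for \<eta> :: R3
  have y0: "y \<eta> \<ge> 0" for \<eta> by (simp add: y_def)
  have my: "(\<lambda>\<eta>. ennreal ((y \<eta>)^2)) \<in> borel_measurable lborel"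
  proof -
    have "y \<in> borel_measurable borel" unfolding y_def by (intro borel_measurable_times mind mFt Fm)
    hence "(\<lambda>\<eta>. (y \<eta>)^2) \<in> borel_measurable borel" by (intro borel_measurable_power)
    thus ?thesis by (simp add: measurable_compose[OF _ measurable_ennreal])
  qed
  have pw: "ennreal (indicator (cball 0 r) \<eta> * y \<eta>) \<le> ennreal (w/2) * indicator (cball 0 r) \<eta> + ennreal (1/(2*w)) * ennreal ((y \<eta>)^2)" for \<eta>
  proof -
    have "indicator (cball 0 r) \<eta> * y \<eta> \<le> w/2 * indicator (cball 0 r) \<eta> + 1/(2*w) * (y \<eta>)^2"
    proof (cases "\<eta> \<in> cball 0 r")
      case True
      have "w/2 + 1/(2*w) * (y \<eta>)^2 - y \<eta> = (y \<eta> - w)^2 / (2*w)" using w by (simp add: field_simps power2_eq_square)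
      moreover have "(y \<eta> - w)^2 / (2*w) \<ge> 0" using w by simp
      ultimately show ?thesis using True by simp
    next
      case False thus ?thesis using w by simp
    qed
    hence "ennreal (indicator (cball 0 r) \<eta> * y \<eta>) \<le> ennreal (w/2 * indicator (cball 0 r) \<eta> + 1/(2*w) * (y \<eta>)^2)"
      by (rule ennreal_leI)
    also have "\<dots> = ennreal (w/2) * indicator (cball 0 r) \<eta> + ennreal (1/(2*w)) * ennreal ((y \<eta>)^2)"
      using w by (simp add: ennreal_plus ennreal_mult[symmetric] indicator_def)
    finally show ?thesis .
  qed
  have "(\<integral>\<^sup>+\<eta>. ennreal (indicator (cball 0 r) \<eta> * y \<eta>) \<partial>lborel)
      \<le> (\<integral>\<^sup>+\<eta>. ennreal (w/2) * indicator (cball 0 r) \<eta> + ennreal (1/(2*w)) * ennreal ((y \<eta>)^2) \<partial>lborel)"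
    by (intro nn_integral_mono pw)
  also have "\<dots> = ennreal (w/2) * emeasure lborel (cball (0::R3) r) + ennreal (1/(2*w)) * (\<integral>\<^sup>+\<eta>. ennreal ((y \<eta>)^2) \<partial>lborel)"
  proof -
    have m_a: "(\<lambda>\<eta>. ennreal (w/2) * indicator (cball 0 r) \<eta>) \<in> borel_measurable lborel"
      by (intro borel_measurable_times_ennreal measurable_const borel_measurable_indicator) auto
    have m_b: "(\<lambda>\<eta>. ennreal (1/(2*w)) * ennreal ((y \<eta>)^2)) \<in> borel_measurable lborel"
      by (intro borel_measurable_times_ennreal measurable_const my) auto
    show ?thesis
      by (subst nn_integral_add[OF m_a m_b]) (simp add: nn_integral_cmult_indicator nn_integral_cmult[OF my])
  qed
  also have "\<dots> \<le> ennreal (w/2) * ennreal (8 * r^3) + ennreal (1/(2*w)) * ennreal Qb"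
    using Q r by (intro add_mono mult_left_mono vol_cball) (auto simp: y_def)
  also have "\<dots> = ennreal (w / 2 * (8 * r^3) + Qb / (2 * w))"
  proof -
    have e1: "ennreal (w/2) * ennreal (8*r^3) = ennreal (w/2*(8*r^3))" using w r by (subst ennreal_mult) auto
    have e2: "ennreal (1/(2*w)) * ennreal Qb = ennreal (Qb/(2*w))" using w Qb0 by (subst ennreal_mult[symmetric]) auto
    show ?thesis unfolding e1 e2 using w r Qb0 by (subst ennreal_plus) auto
  qed
  finally show ?thesis by (simp add: y_def)
qed

lemma Y1_le:
  fixes F :: "R3 \<Rightarrow> complex"
  assumes Fm: "F \<in> borel_measurable borel"
    and AEb: "AE \<zeta> in lborel. (1 + norm \<zeta>)^10 * cmod (F \<zeta>) \<le> E"
    and \<tau>: "0 < \<tau>" "\<tau> \<le> 1" and E: "E \<ge> 0"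
  shows "(\<integral>\<^sup>+\<eta>. ennreal (norm \<eta> powr (-2) * indicator (cball 0 \<tau>) \<eta> * cmod (F (\<xi> + \<eta>))) \<partial>lborel)
     \<le> ennreal (2^10 * E / (1 + norm \<xi>)^10 * (64 * \<tau>))"
proof -
  define A where "A = 1 + norm \<xi>"
  have A1: "A \<ge> 1" by (simp add: A_def)
  define c where "c = 2^10 * E / A^10"
  have c0: "c \<ge> 0" using A1 E by (simp add: c_def)
  have pm: "Measurable.pred lborel (\<lambda>\<zeta>::R3. (1 + norm \<zeta>)^10 * cmod (F \<zeta>) \<le> E)"
  proof -
    have "(\<lambda>\<zeta>::R3. (1 + norm \<zeta>)^10 * cmod (F \<zeta>)) \<in> borel_measurable borel"
      by (intro borel_measurable_times borel_measurable_continuous_onI continuous_intros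
          borel_measurable_continuous_on[where f=cmod, OF _ Fm])
    hence "(\<lambda>\<zeta>::R3. (1 + norm \<zeta>)^10 * cmod (F \<zeta>)) \<in> borel_measurable lborel" by simp
    thus ?thesis unfolding pred_def by (intro borel_measurable_le) auto
  qed
  have "AE \<eta> in lborel. (1 + norm (\<xi> + \<eta>))^10 * cmod (F (\<xi> + \<eta>)) \<le> E"
    by (rule AE_trans[OF pm AEb])
  hence ae: "AE \<eta> in lborel. ennreal (norm \<eta> powr (-2) * indicator (cball 0 \<tau>) \<eta> * cmod (F (\<xi> + \<eta>)))
      \<le> ennreal c * ennreal (norm \<eta> powr (-2) * indicator (cball 0 \<tau>) \<eta>)"
  proof eventually_elim
    fix \<eta> :: R3
    assume h: "(1 + norm (\<xi> + \<eta>))^10 * cmod (F (\<xi> + \<eta>)) \<le> E"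
    have "norm \<eta> powr (-2) * indicator (cball 0 \<tau>) \<eta> * cmod (F (\<xi> + \<eta>))
        \<le> c * (norm \<eta> powr (-2) * indicator (cball 0 \<tau>) \<eta>)"
    proof (cases "norm \<eta> \<le> \<tau>")
      case False thus ?thesis by (simp add: indicator_def)
    next
      case True
      define z where "z = norm (\<xi> + \<eta>)"
      have z0: "z \<ge> 0" by (simp add: z_def)
      have "A \<le> (1 + z) * (1 + norm \<eta>)"
      proof -
        have "norm \<xi> \<le> z + norm \<eta>" unfolding z_def using norm_triangle_ineq4[of "\<xi> + \<eta>" \<eta>] by simp
        thus ?thesis unfolding A_def using z0 by (simp add: algebra_simps) (smt (verit) mult_nonneg_nonneg norm_ge_zero)
      qed
      also have "\<dots> \<le> (1 + z) * 2" using True \<tau> z0 by (intro mult_left_mono) auto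
      finally have "A / 2 \<le> 1 + z" by simp
      hence "(A/2)^10 \<le> (1+z)^10" using A1 by (intro power_mono) auto
      hence "(A/2)^10 * cmod (F (\<xi> + \<eta>)) \<le> E"
        using h by (smt (verit) mult_right_mono norm_ge_zero z_def)
      hence "cmod (F (\<xi> + \<eta>)) \<le> c" using A1 by (simp add: c_def field_simps power_divide)
      thus ?thesis using True by (simp add: mult_right_mono mult.commute)
    qed
    thus "ennreal (norm \<eta> powr (-2) * indicator (cball 0 \<tau>) \<eta> * cmod (F (\<xi> + \<eta>)))
      \<le> ennreal c * ennreal (norm \<eta> powr (-2) * indicator (cball 0 \<tau>) \<eta>)"
      using c0 by (simp add: ennreal_mult[symmetric] ennreal_leI)
  qed
  have "(\<integral>\<^sup>+\<eta>. ennreal (norm \<eta> powr (-2) * indicator (cball 0 \<tau>) \<eta> * cmod (F (\<xi> + \<eta>))) \<partial>lborel)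
     \<le> (\<integral>\<^sup>+\<eta>. ennreal c * ennreal (norm (\<eta>::R3) powr (-2) * indicator (cball 0 \<tau>) \<eta>) \<partial>lborel)"
    by (rule nn_integral_mono_AE[OF ae])
  also have "\<dots> = ennreal c * (\<integral>\<^sup>+\<eta>. ennreal (norm (\<eta>::R3) powr (-2) * indicator (cball 0 \<tau>) \<eta>) \<partial>lborel)"
  proof (rule nn_integral_cmult)
    have "(\<lambda>\<eta>::R3. norm \<eta> powr (-2) * indicator (cball 0 \<tau>) \<eta>) \<in> borel_measurable borel"
      by (intro borel_measurable_times powr_real_measurable borel_measurable_indicator
            borel_measurable_continuous_onI continuous_intros) auto
    thus "(\<lambda>\<eta>::R3. ennreal (norm \<eta> powr (-2) * indicator (cball 0 \<tau>) \<eta>)) \<in> borel_measurable lborel"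
      by (simp add: measurable_compose[OF _ measurable_ennreal])
  qed
  also have "\<dots> \<le> ennreal c * ennreal (64 * \<tau>)"
    by (intro mult_left_mono sing_int \<tau>) auto
  also have "\<dots> = ennreal (c * (64 * \<tau>))" using c0 \<tau> by (simp add: ennreal_mult)
  finally show ?thesis by (simp add: c_def A_def)
qed

lemma split_pw:
  assumes phi: "\<And>x. 0 \<le> \<phi> x \<and> \<phi> x \<le> 1" and supp: "\<And>x. \<bar>x\<bar> > 8/5 \<Longrightarrow> \<phi> x = 0"
    and v: "v \<ge> 0" and t: "\<tau>1 > 0" "\<tau>2 > 0" and \<rho>: "\<rho> = 8/5 * 2 powr l0"
  shows "norm (\<eta>::R3) powr (-2) * \<phi> (norm \<eta> / 2 powr l0) * v \<le>
    norm \<eta> powr (-2) * indicator (cball 0 \<tau>1) \<eta> * v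
    + 1/\<tau>1^2 * (indicator (cball 0 \<tau>2) \<eta> * (indicator (cball 0 \<rho>) \<eta> * v))
    + 1/\<tau>2^2 * (indicator (cball 0 \<rho>) \<eta> * (indicator (cball 0 \<rho>) \<eta> * v))"
proof -
  define a where "a = norm \<eta>"
  have T0: "0 \<le> norm \<eta> powr (-2) * indicator (cball 0 \<tau>1) \<eta> * v"
      "0 \<le> 1/\<tau>1^2 * (indicator (cball 0 \<tau>2) \<eta> * (indicator (cball 0 \<rho>) \<eta> * v))"
      "0 \<le> 1/\<tau>2^2 * (indicator (cball 0 \<rho>) \<eta> * (indicator (cball 0 \<rho>) \<eta> * v))"
    using v by auto
  show ?thesis
  proof (cases "a = 0")
    case True thus ?thesis using T0 by (simp add: a_def)
  next
    case False
    hence a0: "a > 0" by (simp add: a_def)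
    have pe: "norm \<eta> powr (-2) = 1 / a^2" using a0 by (simp add: a_def powr_minus powr_realpow divide_inverse)
    define p where "p = \<phi> (a / 2 powr l0)"
    have p01: "0 \<le> p" "p \<le> 1" using phi by (auto simp: p_def)
    have L: "norm \<eta> powr (-2) * \<phi> (norm \<eta> / 2 powr l0) * v = 1/a^2 * p * v" by (simp add: pe p_def a_def)
    show ?thesis
    proof (cases "a \<le> \<rho>")
      case False
      hence "a / 2 powr l0 > 8/5" using \<rho> by (simp add: field_simps)
      hence "\<bar>a / 2 powr l0\<bar> > 8/5" by linarith
      hence "p = 0" using supp unfolding p_def by blast
      hence "norm \<eta> powr (-2) * \<phi> (norm \<eta> / 2 powr l0) * v = 0" using L by simp
      thus ?thesis using T0 by linarith
    next
      case aR: True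
      have "p * v \<le> v" using p01 v by (simp add: mult_left_le_one_le)
      hence Lv: "1/a^2 * p * v \<le> 1/a^2 * v" using a0 by (simp add: divide_right_mono)
      show ?thesis
      proof (cases "a \<le> \<tau>1")
        case True
        hence "1/a^2 * v = norm \<eta> powr (-2) * indicator (cball 0 \<tau>1) \<eta> * v" by (simp add: pe a_def)
        thus ?thesis using L Lv T0 by linarith
      next
        case a1: False
        have inv1: "1/a^2 \<le> 1/\<tau>1^2" using a1 t by (intro divide_left_mono power_mono mult_pos_pos) auto
        show ?thesis
        proof (cases "a \<le> \<tau>2")
          case True
          have "1/a^2 * v \<le> 1/\<tau>1^2 * v" using inv1 v by (rule mult_right_mono)
          also have "\<dots> = 1/\<tau>1^2 * (indicator (cball 0 \<tau>2) \<eta> * (indicator (cball 0 \<rho>) \<eta> * v))"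
            using True aR by (simp add: a_def)
          finally show ?thesis using L Lv T0 by linarith
        next
          case False
          have inv2: "1/a^2 \<le> 1/\<tau>2^2" using False t by (intro divide_left_mono power_mono mult_pos_pos) auto
          have "1/a^2 * v \<le> 1/\<tau>2^2 * v" using inv2 v by (rule mult_right_mono)
          also have "\<dots> = 1/\<tau>2^2 * (indicator (cball 0 \<rho>) \<eta> * (indicator (cball 0 \<rho>) \<eta> * v))"
            using aR by (simp add: a_def)
          finally show ?thesis using L Lv T0 by linarith
        qed
      qed
    qed
  qed
qed

lemma enn3:
  fixes a b c x y :: real
  assumes "0\<le>a" "0\<le>b" "0\<le>c" "0\<le>x" "0\<le>y"
  shows "ennreal (a + x*b + y*c) = ennreal a + ennreal x * ennreal b + ennreal y * ennreal c"
proof -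
  have "ennreal (a + x*b + y*c) = ennreal (a + x*b) + ennreal (y*c)"
    using assms by (intro ennreal_plus) auto
  also have "ennreal (a + x*b) = ennreal a + ennreal (x*b)"
    using assms by (intro ennreal_plus) auto
  also have "ennreal (x*b) = ennreal x * ennreal b" using assms by (rule_tac ennreal_mult) auto
  also have "ennreal (y*c) = ennreal y * ennreal c" using assms by (rule_tac ennreal_mult) auto
  finally show ?thesis .
qed

lemma Y_le:
  fixes F :: "R3 \<Rightarrow> complex"
  assumes Fm: "F \<in> borel_measurable borel"
    and phi: "\<And>x. 0 \<le> \<phi> x \<and> \<phi> x \<le> 1" and supp: "\<And>x. \<bar>x\<bar> > 8/5 \<Longrightarrow> \<phi> x = 0"
    and AEb: "AE \<zeta> in lborel. (1 + norm \<zeta>)^10 * cmod (F \<zeta>) \<le> E" and E: "E \<ge> 0"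
    and N: "N > 0"
    and W: "(\<integral>\<^sup>+\<zeta>. ennreal ((1 + (norm \<zeta>)^2)^N * (cmod (F \<zeta>))^2) \<partial>lborel) \<le> ennreal Wb" and Wb0: "Wb \<ge> 0"
    and t1: "0 < \<tau>1" "\<tau>1 \<le> 1" and t2: "0 < \<tau>2" and w: "w2 > 0" "w3 > 0"
    and \<rho>: "\<rho> = 8/5 * 2 powr l0" "\<rho> \<le> 16/5"
    and Qb: "Qb = (21/5)^(2*N) * 2^N / (1 + norm \<xi>)^(2*N) * Wb"
  shows "(\<integral>\<^sup>+\<eta>. ennreal (norm \<eta> powr (-2) * \<phi> (norm \<eta> / 2 powr l0) * cmod (F (\<xi> + \<eta>))) \<partial>lborel)
    \<le> ennreal (2^10 * E / (1 + norm \<xi>)^10 * (64 * \<tau>1)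
         + 1/\<tau>1^2 * (w2 / 2 * (8 * \<tau>2^3) + Qb / (2 * w2))
         + 1/\<tau>2^2 * (w3 / 2 * (8 * \<rho>^3) + Qb / (2 * w3)))"
proof -
  have "(0::real) < 2 powr l0" by simp
  hence \<rho>0: "\<rho> > 0" using \<rho>(1) by linarith
  have Qb0: "Qb \<ge> 0" using Qb Wb0 by simp
  have Q: "(\<integral>\<^sup>+\<eta>. ennreal ((indicator (cball 0 \<rho>) \<eta> * cmod (F (\<xi> + \<eta>)))^2) \<partial>lborel) \<le> ennreal Qb"
    unfolding Qb using weight_bound[OF Fm N W _ _ Wb0, of \<rho> \<xi>] \<rho>0 \<rho>(2) by linarith
  define f1 where "f1 \<eta> = norm \<eta> powr (-2) * indicator (cball 0 \<tau>1) \<eta> * cmod (F (\<xi> + \<eta>))" for \<eta> :: R3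
  define f2 where "f2 \<eta> = indicator (cball 0 \<tau>2) \<eta> * (indicator (cball 0 \<rho>) \<eta> * cmod (F (\<xi> + \<eta>)))" for \<eta> :: R3
  define f3 where "f3 \<eta> = indicator (cball 0 \<rho>) \<eta> * (indicator (cball 0 \<rho>) \<eta> * cmod (F (\<xi> + \<eta>)))" for \<eta> :: R3
  have mF: "(\<lambda>\<eta>::R3. cmod (F (\<xi> + \<eta>))) \<in> borel_measurable borel" by (rule mFt[OF Fm])
  have mf1: "(\<lambda>\<eta>. ennreal (f1 \<eta>)) \<in> borel_measurable lborel"
  proof -
    have "f1 \<in> borel_measurable borel" unfolding f1_def
      by (intro borel_measurable_times powr_real_measurable mind mF
            borel_measurable_continuous_onI continuous_intros)
    thus ?thesis by (simp add: measurable_compose[OF _ measurable_ennreal])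
  qed
  have mf2: "(\<lambda>\<eta>. ennreal (f2 \<eta>)) \<in> borel_measurable lborel"
  proof -
    have "f2 \<in> borel_measurable borel" unfolding f2_def by (intro borel_measurable_times mind mF)
    thus ?thesis by (simp add: measurable_compose[OF _ measurable_ennreal])
  qed
  have mf3: "(\<lambda>\<eta>. ennreal (f3 \<eta>)) \<in> borel_measurable lborel"
  proof -
    have "f3 \<in> borel_measurable borel" unfolding f3_def by (intro borel_measurable_times mind mF)
    thus ?thesis by (simp add: measurable_compose[OF _ measurable_ennreal])
  qed
  have f0: "f1 \<eta> \<ge> 0" "f2 \<eta> \<ge> 0" "f3 \<eta> \<ge> 0" for \<eta> by (auto simp: f1_def f2_def f3_def)
  have pw: "ennreal (norm \<eta> powr (-2) * \<phi> (norm \<eta> / 2 powr l0) * cmod (F (\<xi> + \<eta>)))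
      \<le> ennreal (f1 \<eta>) + ennreal (1/\<tau>1^2) * ennreal (f2 \<eta>) + ennreal (1/\<tau>2^2) * ennreal (f3 \<eta>)" for \<eta> :: R3
  proof -
    have "ennreal (norm \<eta> powr (-2) * \<phi> (norm \<eta> / 2 powr l0) * cmod (F (\<xi> + \<eta>)))
        \<le> ennreal (f1 \<eta> + 1/\<tau>1^2 * f2 \<eta> + 1/\<tau>2^2 * f3 \<eta>)"
      unfolding f1_def f2_def f3_def
      by (rule ennreal_leI, rule split_pw[OF phi supp _ t1(1) t2 \<rho>(1)]) auto
    also have "\<dots> = ennreal (f1 \<eta>) + ennreal (1/\<tau>1^2) * ennreal (f2 \<eta>) + ennreal (1/\<tau>2^2) * ennreal (f3 \<eta>)"
      using f0[of \<eta>] t1 t2 by (intro enn3) auto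
    finally show ?thesis .
  qed
  have "(\<integral>\<^sup>+\<eta>. ennreal (norm \<eta> powr (-2) * \<phi> (norm \<eta> / 2 powr l0) * cmod (F (\<xi> + \<eta>))) \<partial>lborel)
     \<le> (\<integral>\<^sup>+\<eta>. ennreal (f1 \<eta>) + ennreal (1/\<tau>1^2) * ennreal (f2 \<eta>) + ennreal (1/\<tau>2^2) * ennreal (f3 \<eta>) \<partial>lborel)"
    by (intro nn_integral_mono pw)
  also have "\<dots> = (\<integral>\<^sup>+\<eta>. ennreal (f1 \<eta>) \<partial>lborel) + ennreal (1/\<tau>1^2) * (\<integral>\<^sup>+\<eta>. ennreal (f2 \<eta>) \<partial>lborel)
       + ennreal (1/\<tau>2^2) * (\<integral>\<^sup>+\<eta>. ennreal (f3 \<eta>) \<partial>lborel)"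
  proof -
    have m12: "(\<lambda>\<eta>. ennreal (f1 \<eta>) + ennreal (1/\<tau>1^2) * ennreal (f2 \<eta>)) \<in> borel_measurable lborel"
      by (intro borel_measurable_add borel_measurable_times_ennreal mf1 mf2 measurable_const) auto
    have m3: "(\<lambda>\<eta>. ennreal (1/\<tau>2^2) * ennreal (f3 \<eta>)) \<in> borel_measurable lborel"
      by (intro borel_measurable_times_ennreal mf3 measurable_const) auto
    have m2: "(\<lambda>\<eta>. ennreal (1/\<tau>1^2) * ennreal (f2 \<eta>)) \<in> borel_measurable lborel"
      by (intro borel_measurable_times_ennreal mf2 measurable_const) auto
    show ?thesis
      by (simp only: nn_integral_add[OF m12 m3] nn_integral_add[OF mf1 m2] nn_integral_cmult[OF mf2] nn_integral_cmult[OF mf3])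
  qed
  also have "\<dots> \<le> ennreal (2^10 * E / (1 + norm \<xi>)^10 * (64 * \<tau>1))
       + ennreal (1/\<tau>1^2) * ennreal (w2 / 2 * (8 * \<tau>2^3) + Qb / (2 * w2))
       + ennreal (1/\<tau>2^2) * ennreal (w3 / 2 * (8 * \<rho>^3) + Qb / (2 * w3))"
  proof (intro add_mono mult_left_mono)
    show "(\<integral>\<^sup>+\<eta>. ennreal (f1 \<eta>) \<partial>lborel) \<le> ennreal (2^10 * E / (1 + norm \<xi>)^10 * (64 * \<tau>1))"
      unfolding f1_def by (rule Y1_le[OF Fm AEb t1 E])
    show "(\<integral>\<^sup>+\<eta>. ennreal (f2 \<eta>) \<partial>lborel) \<le> ennreal (w2 / 2 * (8 * \<tau>2^3) + Qb / (2 * w2))"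
      unfolding f2_def by (rule L2piece[OF Fm t2 w(1) Qb0 Q])
    show "(\<integral>\<^sup>+\<eta>. ennreal (f3 \<eta>) \<partial>lborel) \<le> ennreal (w3 / 2 * (8 * \<rho>^3) + Qb / (2 * w3))"
      unfolding f3_def by (rule L2piece[OF Fm \<rho>0 w(2) Qb0 Q])
  qed auto
  also have "\<dots> = ennreal (2^10 * E / (1 + norm \<xi>)^10 * (64 * \<tau>1)
         + 1/\<tau>1^2 * (w2 / 2 * (8 * \<tau>2^3) + Qb / (2 * w2))
         + 1/\<tau>2^2 * (w3 / 2 * (8 * \<rho>^3) + Qb / (2 * w3)))"
    using t1 t2 w \<rho>0 Qb0 E by (intro enn3[symmetric]) auto
  finally show ?thesis .
qed

lemma arith:
  fixes E m k A S \<rho> cQ c1 :: real and N :: nat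
  assumes E: "E > 0" and m: "m \<ge> 0" and k: "k \<ge> m / 300" and A: "A \<ge> 2 powr k"
    and S: "S \<ge> 0" "S \<le> 2 * 2 powr (m/500)" and \<rho>: "\<rho> > 0" "\<rho> \<le> 16/5 * 2 powr (-29/40*m)"
    and cQ: "cQ \<ge> 0" and c1: "c1 \<ge> 0" and N: "N = 1000"
  shows "c1 * ((2*pi)^3 * E^2 * S) * (2^10 * E / A^10 * (64 * 2 powr (-19/10*m))
      + 1/(2 powr (-19/10*m))^2 * ((E * 2 powr (21/10*m) / A^N) / 2 * (8 * (2 powr (-7/5*m))^3)
           + cQ / A^(2*N) * ((2*pi)^3 * E^2 * S) / (2 * (E * 2 powr (21/10*m) / A^N)))
      + 1/(2 powr (-7/5*m))^2 * ((E * 2 powr (87/80*m) / A^N) / 2 * (8 * \<rho>^3)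
           + cQ / A^(2*N) * ((2*pi)^3 * E^2 * S) / (2 * (E * 2 powr (87/80*m) / A^N))))
    \<le> c1 * (2*pi)^3 * (2^17 + 4 * (4 * (16/5)^3 + cQ * (2*pi)^3)) * E^3 * 2 powr (-3 * m / 2) * 2 powr (-10 * k)"
proof -
  define P where "P a = (2::real) powr a" for a
  have P0: "P a > 0" for a by (simp add: P_def)
  have P0le: "P a \<ge> 0" for a by (simp add: P_def)
  have SP: "S \<le> 2 * P (m/500)" using S by (simp add: P_def)
  have Padd: "P a * P b = P (a + b)" for a b by (simp add: P_def powr_add)
  have Pinv: "1 / P a = P (- a)" for a by (simp add: P_def powr_minus divide_inverse)
  have Ppow: "(P a)^n = P (real n * a)" for a n by (simp add: P_def powr_power)
  have Pmono: "a \<le> b \<Longrightarrow> P a \<le> P b" for a b by (simp add: P_def)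
  have k0: "k \<ge> 0" using k m by simp
  have A1: "A \<ge> P k" using A by (simp add: P_def)
  have Apos: "A > 0" using A1 P0[of k] by linarith
  have AinvN: "1 / A^n \<le> P (- (real n * k))" for n
  proof -
    have "P (real n * k) \<le> A^n" using A1 P0[of k] by (simp add: Ppow[symmetric] power_mono)
    hence "1 / A^n \<le> 1 / P (real n * k)" using P0 Apos by (intro divide_left_mono) auto
    thus ?thesis by (simp add: Pinv)
  qed
  define D where "D = cQ * (2*pi)^3"
  have D0: "D \<ge> 0" using cQ by (simp add: D_def)
  define B where "B = E / A^N"
  have B0: "B > 0" using E Apos by (simp add: B_def)
  define G where "G = 4 * (16/5)^3 + D * S / 2"
  have G0: "G \<ge> 0" using D0 S by (simp add: G_def)
  have Qb: "cQ / A^(2*N) * ((2*pi)^3 * E^2 * S) = D * S * B^2"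
    by (simp add: D_def B_def power_mult power2_eq_square field_simps)
  define T1 where "T1 = 2^10 * E / A^10 * (64 * P (-19/10*m))"
  have T1b: "T1 \<le> 2^16 * E * P (-10*k) * P (-19/10*m)"
  proof -
    have "T1 = 2^16 * E * (1/A^10) * P (-19/10*m)" by (simp add: T1_def)
    also have "\<dots> \<le> 2^16 * E * P (- (real 10 * k)) * P (-19/10*m)"
      using AinvN[of 10] E P0 by (intro mult_right_mono mult_left_mono) (auto intro: less_imp_le)
    finally show ?thesis by simp
  qed
  define T2 where "T2 = 1/(P (-19/10*m))^2 * ((E * P (21/10*m) / A^N) / 2 * (8 * (P (-7/5*m))^3)
           + cQ / A^(2*N) * ((2*pi)^3 * E^2 * S) / (2 * (E * P (21/10*m) / A^N)))"
  have r2: "1/(P (-19/10*m))^2 = P (19/5*m)" by (simp add: Ppow Pinv)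
  have r2': "1/(P (-7/5*m))^2 = P (14/5*m)" by (simp add: Ppow Pinv)
  have q3: "(P (-7/5*m))^3 = P (-21/5*m)" by (simp add: Ppow)
  have e1: "E * P a / A^N = B * P a" for a by (simp add: B_def)
  have T2e: "T2 = B * P (17/10*m) * (4 + D * S / 2)"
  proof -
    have s1: "B * P (21/10*m) / 2 * (8 * P (-21/5*m)) = 4 * B * (P (21/10*m) * P (-21/5*m))" by simp
    have s2: "D * S * B^2 / (2 * (B * P (21/10*m))) = D * S * B * (1 / P (21/10*m)) / 2"
      using B0 P0[of "21/10*m"] by (simp add: power2_eq_square)
    have "T2 = P (19/5*m) * (4 * B * (P (21/10*m) * P (-21/5*m)) + D * S * B * (1 / P (21/10*m)) / 2)"
      by (simp only: T2_def Qb r2 q3 e1 s1 s2)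
    also have "\<dots> = P (19/5*m) * (4 * B * P (-21/10*m) + D * S * B * P (-21/10*m) / 2)"
      by (simp add: Padd Pinv)
    also have "\<dots> = B * (P (19/5*m) * P (-21/10*m)) * (4 + D * S / 2)" by (simp add: algebra_simps)
    also have "\<dots> = B * P (17/10*m) * (4 + D * S / 2)" by (simp add: Padd)
    finally show ?thesis .
  qed
  have T2b: "T2 \<le> B * P (137/80*m) * G"
  proof -
    have "4 + D * S / 2 \<le> G" by (simp add: G_def)
    moreover have "P (17/10*m) \<le> P (137/80*m)" using m by (intro Pmono) auto
    ultimately show ?thesis unfolding T2e using B0 P0 D0 S G0
      by (intro mult_mono mult_left_mono) (auto simp: P0le less_imp_le)
  qed
  define T3 where "T3 = 1/(P (-7/5*m))^2 * ((E * P (87/80*m) / A^N) / 2 * (8 * \<rho>^3)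
           + cQ / A^(2*N) * ((2*pi)^3 * E^2 * S) / (2 * (E * P (87/80*m) / A^N)))"
  have T3b: "T3 \<le> B * P (137/80*m) * G"
  proof -
    have r3: "\<rho>^3 \<le> (16/5)^3 * P (-87/40*m)"
    proof -
      have "\<rho>^3 \<le> (16/5 * P (-29/40*m))^3" using \<rho> by (intro power_mono) (auto simp: P_def)
      also have "\<dots> = (16/5)^3 * (P (-29/40*m))^3" by (simp only: power_mult_distrib)
      also have "(P (-29/40*m))^3 = P (-87/40*m)" by (simp add: Ppow)
      finally show ?thesis .
    qed
    have s1: "B * P (87/80*m) / 2 * (8 * \<rho>^3) = 4 * B * P (87/80*m) * \<rho>^3" by simp
    have s2: "D * S * B^2 / (2 * (B * P (87/80*m))) = D * S * B * (1 / P (87/80*m)) / 2"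
      using B0 P0[of "87/80*m"] by (simp add: power2_eq_square)
    have "T3 = P (14/5*m) * (4 * B * P (87/80*m) * \<rho>^3 + D * S * B * (1 / P (87/80*m)) / 2)"
      by (simp only: T3_def Qb r2' e1 s1 s2)
    also have "\<dots> \<le> P (14/5*m) * (4 * B * P (87/80*m) * ((16/5)^3 * P (-87/40*m)) + D * S * B * P (-87/80*m) / 2)"
      using B0 P0 r3 by (intro mult_left_mono add_mono mult_left_mono) (auto simp: Pinv P0le less_imp_le)
    also have "\<dots> = B * (P (14/5*m) * (P (87/80*m) * P (-87/40*m))) * (4 * (16/5)^3) + B * (P (14/5*m) * P (-87/80*m)) * (D * S / 2)"
      by (simp add: algebra_simps)
    also have "\<dots> = B * P (137/80*m) * G"
      by (simp add: Padd G_def algebra_simps)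
    finally show ?thesis .
  qed
  have SG: "S * G \<le> 2 * (4 * (16/5)^3 + D) * P (m/250)"
  proof -
    have p1: "1 \<le> P (m/500)" using m unfolding P_def by (intro ge_one_powr_ge_zero) auto
    have "D * S \<le> D * (2 * P (m/500))" using mult_left_mono[OF S(2) D0] by (simp add: P_def)
    hence "G \<le> 4 * (16/5)^3 + D * P (m/500)" by (simp add: G_def)
    also have "\<dots> \<le> (4 * (16/5)^3 + D) * P (m/500)" using p1 by (simp add: algebra_simps)
    finally have "G \<le> (4 * (16/5)^3 + D) * P (m/500)" .
    hence "S * G \<le> (2 * P (m/500)) * ((4 * (16/5)^3 + D) * P (m/500))"
      using S G0 by (intro mult_mono) (auto simp: P_def)
    also have "\<dots> = 2 * (4 * (16/5)^3 + D) * (P (m/500) * P (m/500))" by (simp add: algebra_simps)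
    also have "P (m/500) * P (m/500) = P (m/250)" by (simp add: Padd)
    finally show ?thesis by simp
  qed
  have Bb: "B \<le> E * P (-10*k) * P (-33/10*m)"
  proof -
    have "B = E * (1 / A^N)" by (simp add: B_def)
    also have "\<dots> \<le> E * P (- (real N * k))" using AinvN[of N] E by (intro mult_left_mono) auto
    also have "P (- (real N * k)) \<le> P (-10*k + -33/10*m)" using N k k0 by (intro Pmono) auto
    also have "\<dots> = P (-10*k) * P (-33/10*m)" by (simp add: Padd)
    finally show ?thesis using E by (simp add: mult.assoc mult_left_mono)
  qed
  have main1: "E^2 * S * T1 \<le> 2^17 * E^3 * P (-10*k) * P (-3/2*m)"
  proof -
    have "E^2 * S * T1 \<le> E^2 * (2 * P (m/500)) * (2^16 * E * P (-10*k) * P (-19/10*m))"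
      using T1b S SP E by (intro mult_mono mult_left_mono) (auto simp: T1_def P0le less_imp_le)
    also have "\<dots> = 2^17 * E^3 * P (-10*k) * (P (m/500) * P (-19/10*m))" by (simp add: algebra_simps power3_eq_cube power2_eq_square)
    also have "P (m/500) * P (-19/10*m) \<le> P (-3/2*m)" unfolding Padd using m by (intro Pmono) auto
    finally show ?thesis using E P0 by (simp add: mult_left_mono)
  qed
  have main2: "E^2 * S * (T2 + T3) \<le> 4 * (4 * (16/5)^3 + D) * E^3 * P (-10*k) * P (-3/2*m)"
  proof -
    have "E^2 * S * (T2 + T3) \<le> E^2 * S * (2 * (B * P (137/80*m) * G))"
      using T2b T3b S E by (intro mult_left_mono) auto
    also have "\<dots> = 2 * E^2 * B * P (137/80*m) * (S * G)" by (simp add: algebra_simps)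
    also have "\<dots> \<le> 2 * E^2 * (E * P (-10*k) * P (-33/10*m)) * P (137/80*m) * (2 * (4 * (16/5)^3 + D) * P (m/250))"
    proof -
      have hX: "2 * E^2 * B * P (137/80*m) \<le> 2 * E^2 * (E * P (-10*k) * P (-33/10*m)) * P (137/80*m)"
        using Bb E by (intro mult_right_mono mult_left_mono) (auto simp: P0le)
      show ?thesis
        by (rule mult_mono[OF hX SG]) (use E S G0 in \<open>auto simp: P0le\<close>)
    qed
    also have "\<dots> = 4 * (4 * (16/5)^3 + D) * E^3 * P (-10*k) * (P (-33/10*m) * P (137/80*m) * P (m/250))"
      by (simp add: algebra_simps power3_eq_cube power2_eq_square)
    also have "\<dots> \<le> 4 * (4 * (16/5)^3 + D) * E^3 * P (-10*k) * P (-3/2*m)"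
    proof (rule mult_left_mono)
      show "P (-33/10*m) * P (137/80*m) * P (m/250) \<le> P (-3/2*m)" unfolding Padd using m by (intro Pmono) auto
      show "0 \<le> 4 * (4 * (16/5)^3 + D) * E^3 * P (-10*k)" using E D0 by (auto simp: P0le)
    qed
    finally show ?thesis .
  qed
  have "c1 * ((2*pi)^3 * E^2 * S) * (T1 + T2 + T3) = c1 * (2*pi)^3 * (E^2 * S * T1 + E^2 * S * (T2 + T3))"
    by (simp add: algebra_simps)
  also have "\<dots> \<le> c1 * (2*pi)^3 * (2^17 * E^3 * P (-10*k) * P (-3/2*m) + 4 * (4 * (16/5)^3 + D) * E^3 * P (-10*k) * P (-3/2*m))"
    using main1 main2 c1 by (intro mult_left_mono add_mono) auto
  also have "\<dots> = c1 * (2*pi)^3 * (2^17 + 4 * (4 * (16/5)^3 + cQ * (2*pi)^3)) * E^3 * 2 powr (-3 * m / 2) * 2 powr (-10 * k)"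
    by (simp add: D_def P_def algebra_simps)
  finally show ?thesis by (simp add: T1_def T2_def T3_def P_def)
qed




lemma esssup_nonneg_lborel:
  assumes "\<And>x. 0 \<le> g x"
  shows "0 \<le> esssup (lborel::R3 measure) (\<lambda>x. ereal (g x))"
proof (rule ccontr)
  assume "\<not> 0 \<le> esssup (lborel::R3 measure) (\<lambda>x. ereal (g x))"
  hence lt: "esssup (lborel::R3 measure) (\<lambda>x. ereal (g x)) < 0" by simp
  have "AE x in (lborel::R3 measure). ereal (g x) \<le> esssup lborel (\<lambda>x. ereal (g x))" by (rule esssup_AE)
  hence "AE x in (lborel::R3 measure). False"
  proof eventually_elim
    fix x assume "ereal (g x) \<le> esssup lborel (\<lambda>x. ereal (g x))"
    hence "ereal (g x) < 0" using lt by (rule le_less_trans)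
    thus False using assms[of x] by simp
  qed
  moreover have "\<not> (AE x in (lborel::R3 measure). False)"
    using ae_filter_eq_bot_iff[of "lborel::R3 measure"] by (simp add: trivial_limit_def)
  ultimately show False by simp
qed

lemma two_powr_le1: "x \<le> 0 \<Longrightarrow> (2::real) powr x \<le> 1"
  using powr_le_cancel_iff[of 2 x 0] by simp

lemma Hnorm_nonneg: "Hnorm n g \<ge> 0"
  unfolding Hnorm_def by (intro real_sqrt_ge_zero mult_nonneg_nonneg integral_nonneg) auto

lemma Hnorm_vec_nonneg: "Hnorm_vec n I gs \<ge> 0"
  unfolding Hnorm_vec_def by (intro real_sqrt_ge_zero sum_nonneg) auto

lemma hyp_extract:
  fixes u f :: "real \<Rightarrow> R3 \<Rightarrow> complex"
  assumes LF: "L2fourier (f s) (\<lambda>\<xi>. cis (s * Lam_sym \<xi>) * hat (u s) \<xi>)"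
    and inH: "in_H 1000 (u s)" and s: "s \<ge> 0"
    and B: "ereal ((1 + s) powr (- (1/1000)) * Hnorm 1000 (u s)
             + (1 + s) powr (- (1/1000)) * Hnorm_vec 2 UNIV (\<lambda>i x. x$i * f s x)
             + (1 + s) powr (- (2/1000)) * Hnorm_vec 2 UNIV (\<lambda>(i,j) x. x$i * x$j * f s x))
          + esssup lborel (\<lambda>\<xi>. ereal ((1 + norm \<xi>)^10 * cmod (hat (f s) \<xi>)))
          \<le> ereal E"
  shows "hat (f s) \<in> borel_measurable borel" "E \<ge> 0"
    "AE \<zeta> in lborel. (1 + norm \<zeta>)^10 * cmod (hat (f s) \<zeta>) \<le> E"
    "(\<integral>\<^sup>+\<zeta>. ennreal ((1 + (norm \<zeta>)^2)^1000 * (cmod (hat (f s) \<zeta>))^2) \<partial>lborel)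
       \<le> ennreal ((2*pi)^3 * E^2 * (1 + s) powr (1/500))"
proof -
  define F where "F = hat (f s)"
  have LF2: "L2fourier (f s) F" unfolding F_def hat_def by (rule someI[where P="L2fourier (f s)", OF LF])
  show Fm: "hat (f s) \<in> borel_measurable borel" using LF2 by (simp add: L2fourier_def F_def)
  define X where "X = (1 + s) powr (- (1/1000)) * Hnorm 1000 (u s)
             + (1 + s) powr (- (1/1000)) * Hnorm_vec 2 UNIV (\<lambda>i x. x$i * f s x)
             + (1 + s) powr (- (2/1000)) * Hnorm_vec 2 UNIV (\<lambda>(i,j) x. x$i * x$j * f s x)"
  define e where "e = esssup lborel (\<lambda>\<xi>. ereal ((1 + norm \<xi>)^10 * cmod (hat (f s) \<xi>)))"
  have e0: "0 \<le> e" unfolding e_def by (rule esssup_nonneg_lborel) auto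
  have X0: "0 \<le> X" unfolding X_def
    by (intro add_nonneg_nonneg mult_nonneg_nonneg Hnorm_nonneg Hnorm_vec_nonneg) auto
  have B': "ereal X + e \<le> ereal E" using B by (simp add: X_def e_def)
  have "ereal X \<le> ereal X + e" using e0 by (simp add: add_increasing2)
  hence "ereal X \<le> ereal E" using B' by (rule order_trans)
  hence XE: "X \<le> E" by simp
  have eE: "e \<le> ereal E"
  proof -
    have "e \<le> ereal X + e" using X0 by (simp add: add_increasing)
    thus ?thesis using B' by (rule order_trans)
  qed
  show "E \<ge> 0" using X0 XE by simp
  have "AE \<zeta> in lborel. ereal ((1 + norm \<zeta>)^10 * cmod (hat (f s) \<zeta>)) \<le> e" unfolding e_def by (rule esssup_AE)
  thus "AE \<zeta> in lborel. (1 + norm \<zeta>)^10 * cmod (hat (f s) \<zeta>) \<le> E"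
  proof eventually_elim
    fix \<zeta> assume "ereal ((1 + norm \<zeta>)^10 * cmod (hat (f s) \<zeta>)) \<le> e"
    hence "ereal ((1 + norm \<zeta>)^10 * cmod (hat (f s) \<zeta>)) \<le> ereal E" using eE by (rule order_trans)
    thus "(1 + norm \<zeta>)^10 * cmod (hat (f s) \<zeta>) \<le> E" by simp
  qed
  have Hs: "(1 + s) powr (- (1/1000)) * Hnorm 1000 (u s) \<le> E"
    using XE X0 Hnorm_vec_nonneg[of 2 UNIV "\<lambda>i x. x$i * f s x"] Hnorm_vec_nonneg[of 2 UNIV "\<lambda>(i,j) x. x$i * x$j * f s x"]
    unfolding X_def by (smt (verit) mult_nonneg_nonneg powr_ge_zero)
  have Hb: "Hnorm 1000 (u s) \<le> E * (1 + s) powr (1/1000)"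
  proof -
    have "Hnorm 1000 (u s) = (1 + s) powr (1/1000) * ((1 + s) powr (- (1/1000)) * Hnorm 1000 (u s))"
      using s by (simp add: powr_minus field_simps)
    also have "\<dots> \<le> (1 + s) powr (1/1000) * E" using Hs by (intro mult_left_mono) auto
    finally show ?thesis by (simp add: mult.commute)
  qed
  define Lu where "Lu = (LINT \<xi>|lborel. (1 + (norm \<xi>)^2)^1000 * (cmod (hat (u s) \<xi>))^2)"
  have int: "integrable lborel (\<lambda>\<xi>. (1 + (norm \<xi>)^2)^1000 * (cmod (hat (u s) \<xi>))^2)"
    using inH by (simp add: in_H_def)
  have Lu0: "Lu \<ge> 0" unfolding Lu_def by (intro integral_nonneg_AE AE_I2) auto
  have "Hnorm 1000 (u s) = sqrt ((2*pi) powr (-3) * Lu)" by (simp add: Hnorm_def Lu_def)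
  hence "(Hnorm 1000 (u s))^2 = (2*pi) powr (-3) * Lu" using Lu0 by simp
  hence Lu_eq: "Lu = (2*pi)^3 * (Hnorm 1000 (u s))^2"
    by (simp add: powr_minus powr_realpow field_simps)
  have "(Hnorm 1000 (u s))^2 \<le> (E * (1 + s) powr (1/1000))^2"
    using Hb Hnorm_nonneg by (intro power_mono) auto
  also have "\<dots> = E^2 * (1 + s) powr (1/500)"
  proof -
    have "((1 + s) powr (1/1000))^2 = (1 + s) powr (real 2 * (1/1000))"
      using s by (intro powr_power) simp
    thus ?thesis by (simp add: power_mult_distrib)
  qed
  finally have LuE: "Lu \<le> (2*pi)^3 * E^2 * (1 + s) powr (1/500)" unfolding Lu_eq by simp
  have AEeq: "AE \<xi> in lborel. F \<xi> = cis (s * Lam_sym \<xi>) * hat (u s) \<xi>"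
    by (rule L2_unique[OF LF2 LF])
  have "(\<integral>\<^sup>+\<zeta>. ennreal ((1 + (norm \<zeta>)^2)^1000 * (cmod (hat (f s) \<zeta>))^2) \<partial>lborel)
     = (\<integral>\<^sup>+\<zeta>. ennreal ((1 + (norm \<zeta>)^2)^1000 * (cmod (hat (u s) \<zeta>))^2) \<partial>lborel)"
    using AEeq by (intro nn_integral_cong_AE) (auto simp: F_def norm_mult elim!: eventually_mono)
  also have "\<dots> = ennreal Lu" unfolding Lu_def by (rule nn_integral_eq_integral[OF int]) auto
  also have "\<dots> \<le> ennreal ((2*pi)^3 * E^2 * (1 + s) powr (1/500))" using LuE by (rule ennreal_leI)
  finally show "(\<integral>\<^sup>+\<zeta>. ennreal ((1 + (norm \<zeta>)^2)^1000 * (cmod (hat (f s) \<zeta>))^2) \<partial>lborel)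
       \<le> ennreal ((2*pi)^3 * E^2 * (1 + s) powr (1/500))" .
qed

theorem lemma5p2:
  fixes \<phi> :: "real \<Rightarrow> real"
  assumes "smooth_real \<phi>"
    and "\<forall>x. \<phi> (- x) = \<phi> x"
    and "\<forall>x. 0 \<le> \<phi> x \<and> \<phi> x \<le> 1"
    and "\<forall>x. \<bar>x\<bar> > 8/5 \<longrightarrow> \<phi> x = 0"
    and "\<forall>x. \<bar>x\<bar> \<le> 5/4 \<longrightarrow> \<phi> x = 1"
  shows "\<exists>C. \<forall>T \<epsilon>1 (u :: real \<Rightarrow> real^3 \<Rightarrow> complex) (f :: real \<Rightarrow> real^3 \<Rightarrow> complex).
     T > 0 \<and> cont_H 1000 T u \<and> solves_hartree T u \<and>
     (\<forall>t\<in>{0..T}. L2fourier (f t) (\<lambda>\<xi>. cis (t * Lam_sym \<xi>) * hat (u t) \<xi>)) \<and>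
     (\<forall>t\<in>{0..T}.
        (\<forall>i. in_H 2 (\<lambda>x. x$i * f t x)) \<and>
        (\<forall>i j. in_H 2 (\<lambda>x. x$i * x$j * f t x)) \<and>
        ereal ((1 + t) powr (- (1/1000)) * Hnorm 1000 (u t)
             + (1 + t) powr (- (1/1000)) * Hnorm_vec 2 UNIV (\<lambda>i x. x$i * f t x)
             + (1 + t) powr (- (2/1000)) * Hnorm_vec 2 UNIV (\<lambda>(i,j) x. x$i * x$j * f t x))
          + esssup lborel (\<lambda>\<xi>. ereal ((1 + norm \<xi>)^10 * cmod (hat (f t) \<xi>)))
          \<le> ereal \<epsilon>1)
     \<longrightarrow> (\<forall>(m::nat) (k::int) s \<xi>.
           real_of_int k \<ge> real m / 300 \<and>
           s \<in> {2^m - 1 .. 2^m} \<and> s \<in> {0..T} \<and>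
           2 powr k \<le> norm \<xi> \<and> norm \<xi> \<le> 2 powr (k+1)
           \<longrightarrow> cmod (I0 \<phi> (hat (f s)) (\<lfloor>- 29 * real m / 40\<rfloor> + 1) s \<xi>)
                 \<le> C * \<epsilon>1^3 * 2 powr (- 3 * real m / 2) * 2 powr (- 10 * real_of_int k))"
proof -
  define cQ where "cQ = (21/5::real)^(2*1000) * 2^1000"
  define c1 where "c1 = 2 * (2*pi) powr (-5::real)"
  define C where "C = c1 * (2*pi)^3 * (2^17 + 4 * (4 * (16/5)^3 + cQ * (2*pi)^3))"
  have cQ0: "cQ \<ge> 0" by (simp add: cQ_def)
  have c10: "c1 \<ge> 0" by (simp add: c1_def)
  have phi0: "\<And>x. 0 \<le> \<phi> x" and phi01: "\<And>x. 0 \<le> \<phi> x \<and> \<phi> x \<le> 1" using assms(3) by auto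
  have supp: "\<And>x. \<bar>x\<bar> > 8/5 \<Longrightarrow> \<phi> x = 0" using assms(4) by auto
  have phim: "\<phi> \<in> borel_measurable borel"
  proof -
    have "\<phi> differentiable (at x)" for x using assms(1) unfolding smooth_real_def
      by (metis funpow_0)
    hence "continuous_on UNIV \<phi>"
      by (simp add: continuous_at_imp_continuous_on differentiable_imp_continuous_within)
    thus ?thesis by (rule borel_measurable_continuous_onI)
  qed
  show ?thesis
  proof (rule exI[of _ C], intro allI impI)
    fix T \<epsilon>1 and u f :: "real \<Rightarrow> real^3 \<Rightarrow> complex"
    assume H: "T > 0 \<and> cont_H 1000 T u \<and> solves_hartree T u \<and>
     (\<forall>t\<in>{0..T}. L2fourier (f t) (\<lambda>\<xi>. cis (t * Lam_sym \<xi>) * hat (u t) \<xi>)) \<and>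
     (\<forall>t\<in>{0..T}.
        (\<forall>i. in_H 2 (\<lambda>x. x$i * f t x)) \<and>
        (\<forall>i j. in_H 2 (\<lambda>x. x$i * x$j * f t x)) \<and>
        ereal ((1 + t) powr (- (1/1000)) * Hnorm 1000 (u t)
             + (1 + t) powr (- (1/1000)) * Hnorm_vec 2 UNIV (\<lambda>i x. x$i * f t x)
             + (1 + t) powr (- (2/1000)) * Hnorm_vec 2 UNIV (\<lambda>(i,j) x. x$i * x$j * f t x))
          + esssup lborel (\<lambda>\<xi>. ereal ((1 + norm \<xi>)^10 * cmod (hat (f t) \<xi>)))
          \<le> ereal \<epsilon>1)"
    fix m :: nat and k :: int and s :: real and \<xi> :: R3
    assume h: "real_of_int k \<ge> real m / 300 \<and>
           s \<in> {2^m - 1 .. 2^m} \<and> s \<in> {0..T} \<and>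
           2 powr k \<le> norm \<xi> \<and> norm \<xi> \<le> 2 powr (k+1)"
    have sT: "s \<in> {0..T}" and s0: "s \<ge> 0" and sM: "s \<le> 2^m" and km: "real_of_int k \<ge> real m / 300"
      and kx: "2 powr k \<le> norm \<xi>" using h by auto
    have LF: "L2fourier (f s) (\<lambda>\<xi>. cis (s * Lam_sym \<xi>) * hat (u s) \<xi>)" using H sT by blast
    have inH: "in_H 1000 (u s)" using H sT by (auto simp: cont_H_def)
    have Bd: "ereal ((1 + s) powr (- (1/1000)) * Hnorm 1000 (u s)
             + (1 + s) powr (- (1/1000)) * Hnorm_vec 2 UNIV (\<lambda>i x. x$i * f s x)
             + (1 + s) powr (- (2/1000)) * Hnorm_vec 2 UNIV (\<lambda>(i,j) x. x$i * x$j * f s x))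
          + esssup lborel (\<lambda>\<xi>. ereal ((1 + norm \<xi>)^10 * cmod (hat (f s) \<xi>)))
          \<le> ereal \<epsilon>1" using H sT by blast
    note hx = hyp_extract[where f=f and u=u and s=s, OF LF inH s0 Bd]
    define F where "F = hat (f s)"
    have Fm: "F \<in> borel_measurable borel" using hx(1) by (simp add: F_def)
    have E0: "\<epsilon>1 \<ge> 0" using hx(2) .
    have AEb: "AE \<zeta> in lborel. (1 + norm \<zeta>)^10 * cmod (F \<zeta>) \<le> \<epsilon>1" using hx(3) by (simp add: F_def)
    define S where "S = (1 + s) powr (1/500)"
    define Wb where "Wb = (2*pi)^3 * \<epsilon>1^2 * S"
    have S0: "S \<ge> 0" by (simp add: S_def)
    have Wb0: "Wb \<ge> 0" using S0 by (simp add: Wb_def)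
    have W: "(\<integral>\<^sup>+\<zeta>. ennreal ((1 + (norm \<zeta>)^2)^1000 * (cmod (F \<zeta>))^2) \<partial>lborel) \<le> ennreal Wb"
      using hx(4) by (simp add: F_def Wb_def S_def)
    define l0 where "l0 = \<lfloor>- 29 * real m / 40\<rfloor> + 1"
    define J where "J = (\<integral>\<^sup>+z. ennreal (norm (fst z) powr (-2) * \<phi> (norm (fst z) / 2 powr l0) * cmod (F (\<xi> + fst z))
        * cmod (F (\<xi> + snd z)) * cmod (F (\<xi> + fst z + snd z))) \<partial>(lborel :: (R3 \<times> R3) measure))"
    define L0 where "L0 = (\<integral>\<^sup>+\<zeta>. ennreal ((cmod (F \<zeta>))^2) \<partial>lborel)"
    define Y where "Y = (\<integral>\<^sup>+\<eta>. ennreal (norm \<eta> powr (-2) * \<phi> (norm \<eta> / 2 powr l0) * cmod (F (\<xi> + \<eta>))) \<partial>lborel)"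
    have I0J: "ennreal (cmod (I0 \<phi> F l0 s \<xi>)) \<le> ennreal c1 * J"
      unfolding J_def c1_def by (rule I0_le[OF phi0])
    have JLY: "J \<le> L0 * Y"
      unfolding J_def L0_def Y_def by (rule J_le[OF Fm phim phi0])
    have L0W: "L0 \<le> ennreal Wb"
    proof -
      have "L0 \<le> (\<integral>\<^sup>+\<zeta>. ennreal ((1 + (norm \<zeta>)^2)^1000 * (cmod (F \<zeta>))^2) \<partial>lborel)"
        unfolding L0_def
      proof (intro nn_integral_mono ennreal_leI)
        fix \<zeta> :: R3
        have "1 \<le> (1 + (norm \<zeta>)^2)^1000" by (intro one_le_power) simp
        thus "(cmod (F \<zeta>))^2 \<le> (1 + (norm \<zeta>)^2)^1000 * (cmod (F \<zeta>))^2"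
          by (metis mult_right_mono mult_1 zero_le_power2)
      qed
      also have "\<dots> \<le> ennreal Wb" by (rule W)
      finally show ?thesis .
    qed
    have goal_enn: "cmod (I0 \<phi> F l0 s \<xi>) \<le> C * \<epsilon>1^3 * 2 powr (- 3 * real m / 2) * 2 powr (- 10 * real_of_int k)"
    proof (cases "\<epsilon>1 = 0")
      case True
      hence "Wb = 0" by (simp add: Wb_def)
      hence "L0 = 0" using L0W by simp
      hence "J = 0" using JLY by simp
      hence "ennreal (cmod (I0 \<phi> F l0 s \<xi>)) \<le> 0" using I0J by simp
      thus ?thesis using True by simp
    next
      case False
      hence Ep: "\<epsilon>1 > 0" using E0 by simp
      define \<tau>1 where "\<tau>1 = (2::real) powr (-19/10 * real m)"
      define \<tau>2 where "\<tau>2 = (2::real) powr (-7/5 * real m)"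
      define A where "A = 1 + norm \<xi>"
      have Ap: "A > 0" by (simp add: A_def add_pos_nonneg)
      define w2 where "w2 = \<epsilon>1 * 2 powr (21/10 * real m) / A^1000"
      define w3 where "w3 = \<epsilon>1 * 2 powr (87/80 * real m) / A^1000"
      define \<rho> where "\<rho> = 8/5 * (2::real) powr l0"
      define Qb where "Qb = cQ / (1 + norm \<xi>)^(2*1000) * Wb"
      have t1: "0 < \<tau>1" "\<tau>1 \<le> 1" unfolding \<tau>1_def by (auto intro: two_powr_le1)
      have t2: "0 < \<tau>2" by (simp add: \<tau>2_def)
      have w: "w2 > 0" "w3 > 0" using Ep Ap by (auto simp: w2_def w3_def)
      have l0b: "real_of_int l0 \<le> - 29 / 40 * real m + 1" unfolding l0_def by linarith
      have \<rho>b: "\<rho> \<le> 16/5 * 2 powr (-29/40 * real m)"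
      proof -
        have "(2::real) powr l0 \<le> 2 powr (-29/40 * real m + 1)" using l0b by simp
        also have "\<dots> = 2 powr (-29/40 * real m) * 2 powr 1" by (rule powr_add)
        also have "\<dots> = 2 * 2 powr (-29/40 * real m)" by simp
        finally show ?thesis unfolding \<rho>_def by simp
      qed
      have \<rho>16: "\<rho> \<le> 16/5"
      proof -
        have "(2::real) powr (-29/40 * real m) \<le> 1" by (intro two_powr_le1) simp
        thus ?thesis using \<rho>b by linarith
      qed
      have \<rho>0: "\<rho> > 0" by (simp add: \<rho>_def)
      have N0: "(0::nat) < 1000" by simp
      have Qbe: "Qb = (21/5)^(2*1000) * 2^1000 / (1 + norm \<xi>)^(2*1000) * Wb"
        unfolding Qb_def cQ_def by (rule refl)
      have Yb: "Y \<le> ennreal (2^10 * \<epsilon>1 / (1 + norm \<xi>)^10 * (64 * \<tau>1)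
         + 1/\<tau>1^2 * (w2 / 2 * (8 * \<tau>2^3) + Qb / (2 * w2))
         + 1/\<tau>2^2 * (w3 / 2 * (8 * \<rho>^3) + Qb / (2 * w3)))"
        unfolding Y_def
        by (rule Y_le[OF Fm phi01 supp AEb E0 N0 W Wb0 t1 t2 w \<rho>_def \<rho>16 Qbe])
      define Yb where "Yb = 2^10 * \<epsilon>1 / (1 + norm \<xi>)^10 * (64 * \<tau>1)
         + 1/\<tau>1^2 * (w2 / 2 * (8 * \<tau>2^3) + Qb / (2 * w2))
         + 1/\<tau>2^2 * (w3 / 2 * (8 * \<rho>^3) + Qb / (2 * w3))"
      have Qb0: "Qb \<ge> 0" using cQ0 Wb0 by (simp add: Qb_def)
      have Yb0: "Yb \<ge> 0" unfolding Yb_def using Ep t1 t2 w \<rho>0 Qb0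
        by (intro add_nonneg_nonneg mult_nonneg_nonneg divide_nonneg_nonneg) auto
      have "ennreal (cmod (I0 \<phi> F l0 s \<xi>)) \<le> ennreal c1 * (L0 * Y)"
        using I0J JLY by (meson order_trans mult_left_mono zero_le)
      also have "\<dots> \<le> ennreal c1 * (ennreal Wb * ennreal Yb)"
        using L0W Yb unfolding Yb_def by (intro mult_left_mono mult_mono) auto
      also have "\<dots> = ennreal (c1 * Wb * Yb)" using c10 Wb0 Yb0 by (simp add: ennreal_mult mult.assoc)
      finally have "cmod (I0 \<phi> F l0 s \<xi>) \<le> c1 * Wb * Yb"
        using c10 Wb0 Yb0 by (subst (asm) ennreal_le_iff) auto
      also have "c1 * Wb * Yb \<le> C * \<epsilon>1^3 * 2 powr (- 3 * real m / 2) * 2 powr (- 10 * real_of_int k)"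
      proof -
        have A2k: "A \<ge> 2 powr real_of_int k" using kx by (simp add: A_def)
        have Sb: "S \<le> 2 * 2 powr (real m / 500)"
        proof -
          have "1 + s \<le> 2 * 2 powr real m" using sM
            by (simp add: powr_realpow) (smt (verit) one_le_power)
          hence "S \<le> (2 * 2 powr real m) powr (1/500)" unfolding S_def using s0 by (intro powr_mono2) auto
          also have "\<dots> = 2 powr (1/500) * 2 powr (real m / 500)" by (simp add: powr_mult powr_powr)
          also have "\<dots> \<le> 2 * 2 powr (real m / 500)"
          proof (intro mult_right_mono)
            show "(2::real) powr (1/500) \<le> 2" using powr_le_cancel_iff[of 2 "1/500" 1] by simp
          qed simp
          finally show ?thesis .
        qed
        have "c1 * Wb * Yb = c1 * ((2*pi)^3 * \<epsilon>1^2 * S) * (2^10 * \<epsilon>1 / A^10 * (64 * 2 powr (-19/10 * real m))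
            + 1/(2 powr (-19/10 * real m))^2 * ((\<epsilon>1 * 2 powr (21/10 * real m) / A^1000) / 2 * (8 * (2 powr (-7/5 * real m))^3)
               + cQ / A^(2*1000) * ((2*pi)^3 * \<epsilon>1^2 * S) / (2 * (\<epsilon>1 * 2 powr (21/10 * real m) / A^1000)))
            + 1/(2 powr (-7/5 * real m))^2 * ((\<epsilon>1 * 2 powr (87/80 * real m) / A^1000) / 2 * (8 * \<rho>^3)
               + cQ / A^(2*1000) * ((2*pi)^3 * \<epsilon>1^2 * S) / (2 * (\<epsilon>1 * 2 powr (87/80 * real m) / A^1000))))"
          unfolding Yb_def Wb_def Qb_def \<tau>1_def \<tau>2_def w2_def w3_def A_def by (rule refl)
        also have "\<dots> \<le> c1 * (2*pi)^3 * (2^17 + 4 * (4 * (16/5)^3 + cQ * (2*pi)^3)) * \<epsilon>1^3 * 2 powr (-3 * real m / 2) * 2 powr (-10 * real_of_int k)"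
          by (rule arith[OF Ep _ km A2k S0 Sb \<rho>0 \<rho>b cQ0 c10 refl]) simp
        finally show ?thesis by (simp add: C_def)
      qed
      finally show ?thesis .
    qed
    thus "cmod (I0 \<phi> (hat (f s)) (\<lfloor>- 29 * real m / 40\<rfloor> + 1) s \<xi>)
                 \<le> C * \<epsilon>1^3 * 2 powr (- 3 * real m / 2) * 2 powr (- 10 * real_of_int k)"
      by (simp add: F_def l0_def)
  qed
qed


end
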